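(* Let $K$ be a field complete with respect to a discrete valuation with perfect residue field of characteristic $p>0$, and let $L/K$ be a totally ramified Galois extension of degree $p$ with (lower) ramification break $b_1$. If $K$ has characteristic $p$, then $L/K$ has a Galois scaffold of tolerance $\mathfrak{T}=\infty$. If $K$ has characteristic $0$ and $b_1\ne pv_K(p)/(p-1)$, then $L/K$ has a Galois scaffold of tolerance $\mathfrak{T}=pv_K(p)-(p-1)b_1\ge1$.
   Context: $v_K,v_L$ are the normalized valuations of $K,L$; $\mathfrak{O}_K,\mathfrak{O}_L$ valuation rings, $\mathfrak{P}_L$ maximal ideal of $\mathfrak{O}_L$. For a totally ramified Galois extension $L/K$ of degree $p^n$ with group $G$, the ramification groups are $G_j=\{\sigma\in G:(\sigma-1)\mathfrak{O}_L\subseteq\mathfrak{P}_L^{j+1}\}$ and the lower ramification breaks counted with multiplicity are $b_i=\max\{j:|G_j|>p^{n-i}\}$, $1\le i\le n$. Let $\mathbb{S}_{p^n}=\{0,\dots,p^n-1\}$ with base-$p$ digits $s=\sum_{i=1}^n s_{(n-i)}p^{n-i}$. For integers $b_1,\dots,b_n$ prime to $p$, $\mathfrak{b}(s)=\sum_i s_{(n-i)}p^{n-i}b_i$, and $\mathfrak{a}(t)\in\mathbb{S}_{p^n}$ (for $t\in\mathbb{Z}$) is the unique element with $\mathfrak{b}(\mathfrak{a}(t))\equiv-t\pmod{p^n}$. A $K[G]$-scaffold on $L$ of tolerance $\mathfrak{T}\ge1$ (possibly $\infty$) with shift parameters $b_1,\dots,b_n$ consists of: (i) $\lambda_t\in L$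 ($t\in\mathbb{Z}$) with $v_L(\lambda_t)=t$ and $\lambda_{t_1}\lambda_{t_2}^{-1}\in K$ whenever $t_1\equiv t_2\pmod{p^n}$; (ii) $\Psi_1,\dots,\Psi_n\in K[G]$ with $\Psi_i\cdot1=0$ such that for each $i,t$ there is $u_{i,t}\in\mathfrak{O}_K^\times$ with $\Psi_i\cdot\lambda_t\equiv u_{i,t}\lambda_{t+p^{n-i}b_i}$ if $\mathfrak{a}(t)_{(n-i)}\ge1$ and $\equiv0$ if $\mathfrak{a}(t)_{(n-i)}=0$, modulo $\lambda_{t+p^{n-i}b_i}\mathfrak{P}_L^{\mathfrak{T}}$ (equalities if $\mathfrak{T}=\infty$). A Galois scaffold is a $K[G]$-scaffold (with $K[G]$ acting on $L$ in the usual way, residue field perfect) whose shift parameters are the lower ramification breaks $b_1,\dots,b_n$ of $L/K$. *)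

theory Defs
  imports Main "HOL-Library.Extended_Nat" "HOL-Computational_Algebra.Primes"
begin

text \<open>The top field L is the whole type 'a; the base field K is a subset.
  vL is the normalized valuation of L (its value at 0 is irrelevant, 0 is treated as having
  valuation infinity everywhere below); vK is the normalized valuation of K.\<close>

definition subfield :: "'a::field set \<Rightarrow> bool" where
  "subfield K \<longleftrightarrow> 0 \<in> K \<and> 1 \<in> K \<and> (\<forall>x\<in>K. \<forall>y\<in>K. x + y \<in> K \<and> x - y \<in> K \<and> x * y \<in> K)
     \<and> (\<forall>x\<in>K. x \<noteq> 0 \<longrightarrow> inverse x \<in> K)"

definition normalized_dval :: "('a::field \<Rightarrow> int) \<Rightarrow> bool" where
  "normalized_dval v \<longleftrightarrow>
     (\<forall>x y. x \<noteq> 0 \<longrightarrow> y \<noteq> 0 \<longrightarrow> v (x * y) = v x + v y) \<and>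
     (\<forall>x y. x \<noteq> 0 \<longrightarrow> y \<noteq> 0 \<longrightarrow> x + y \<noteq> 0 \<longrightarrow> v (x + y) \<ge> min (v x) (v y)) \<and>
     (\<forall>m. \<exists>x. x \<noteq> 0 \<and> v x = m)"

definition normalized_dval_on :: "'a::field set \<Rightarrow> ('a \<Rightarrow> int) \<Rightarrow> bool" where
  "normalized_dval_on K v \<longleftrightarrow>
     (\<forall>x\<in>K. \<forall>y\<in>K. x \<noteq> 0 \<longrightarrow> y \<noteq> 0 \<longrightarrow> v (x * y) = v x + v y) \<and>
     (\<forall>x\<in>K. \<forall>y\<in>K. x \<noteq> 0 \<longrightarrow> y \<noteq> 0 \<longrightarrow> x + y \<noteq> 0 \<longrightarrow> v (x + y) \<ge> min (v x) (v y)) \<and>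
     (\<forall>m. \<exists>x\<in>K. x \<noteq> 0 \<and> v x = m)"

definition val_ring :: "'a::field set \<Rightarrow> ('a \<Rightarrow> int) \<Rightarrow> 'a set" where
  "val_ring K v = {x\<in>K. x = 0 \<or> v x \<ge> 0}"

definition max_ideal :: "'a::field set \<Rightarrow> ('a \<Rightarrow> int) \<Rightarrow> 'a set" where
  "max_ideal K v = {x\<in>K. x = 0 \<or> v x > 0}"

definition complete_wrt :: "'a::field set \<Rightarrow> ('a \<Rightarrow> int) \<Rightarrow> bool" where
  "complete_wrt K v \<longleftrightarrow>
     (\<forall>s::nat \<Rightarrow> 'a. (\<forall>n. s n \<in> K) \<longrightarrow>
        (\<forall>M. \<exists>N. \<forall>m\<ge>N. \<forall>n\<ge>N. s m = s n \<or> v (s m - s n) \<ge> M) \<longrightarrow>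
        (\<exists>x\<in>K. \<forall>M. \<exists>N. \<forall>n\<ge>N. s n = x \<or> v (s n - x) \<ge> M))"

definition residue_char :: "'a::field set \<Rightarrow> ('a \<Rightarrow> int) \<Rightarrow> nat \<Rightarrow> bool" where
  "residue_char K v p \<longleftrightarrow> of_nat p \<in> max_ideal K v"

definition residue_perfect :: "'a::field set \<Rightarrow> ('a \<Rightarrow> int) \<Rightarrow> nat \<Rightarrow> bool" where
  "residue_perfect K v p \<longleftrightarrow>
     (\<forall>a\<in>val_ring K v. \<exists>b\<in>val_ring K v. a - b ^ p \<in> max_ideal K v)"

definition field_degree :: "'a::field set \<Rightarrow> nat \<Rightarrow> bool" where
  "field_degree K n \<longleftrightarrow> (\<exists>B. finite B \<and> card B = n \<and>
     (\<forall>x. \<exists>c. (\<forall>b\<in>B. c b \<in> K) \<and> x = (\<Sum>b\<in>B. c b * b)) \<and>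
     (\<forall>c. (\<forall>b\<in>B. c b \<in> K) \<longrightarrow> (\<Sum>b\<in>B. c b * b) = 0 \<longrightarrow> (\<forall>b\<in>B. c b = 0)))"

definition gal :: "'a::field set \<Rightarrow> ('a \<Rightarrow> 'a) set" where
  "gal K = {\<sigma>. bij \<sigma> \<and> (\<forall>x y. \<sigma> (x + y) = \<sigma> x + \<sigma> y) \<and> (\<forall>x y. \<sigma> (x * y) = \<sigma> x * \<sigma> y)
              \<and> \<sigma> 1 = 1 \<and> (\<forall>k\<in>K. \<sigma> k = k)}"

definition galois_of_degree :: "'a::field set \<Rightarrow> nat \<Rightarrow> bool" where
  "galois_of_degree K n \<longleftrightarrow> field_degree K n \<and> card (gal K) = n"

text \<open>Totally ramified of degree n: v_L restricted to K is n * v_K (ramification index e = n = [L:K]).\<close>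
definition totally_ramified :: "'a::field set \<Rightarrow> ('a \<Rightarrow> int) \<Rightarrow> ('a \<Rightarrow> int) \<Rightarrow> nat \<Rightarrow> bool" where
  "totally_ramified K vK vL n \<longleftrightarrow> field_degree K n \<and> (\<forall>x\<in>K. x \<noteq> 0 \<longrightarrow> vL x = int n * vK x)"

definition ram_group :: "'a::field set \<Rightarrow> ('a \<Rightarrow> int) \<Rightarrow> int \<Rightarrow> ('a \<Rightarrow> 'a) set" where
  "ram_group K vL j = {\<sigma>\<in>gal K. \<forall>x. (x = 0 \<or> vL x \<ge> 0) \<longrightarrow> (\<sigma> x - x = 0 \<or> vL (\<sigma> x - x) \<ge> j + 1)}"

definition lower_break :: "'a::field set \<Rightarrow> ('a \<Rightarrow> int) \<Rightarrow> nat \<Rightarrow> nat \<Rightarrow> nat \<Rightarrow> int" where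
  "lower_break K vL p n i = (GREATEST j::int. card (ram_group K vL j) > p ^ (n - i))"

definition digit :: "nat \<Rightarrow> nat \<Rightarrow> nat \<Rightarrow> nat" where
  "digit p k s = (s div p ^ k) mod p"

definition frak_b :: "nat \<Rightarrow> nat \<Rightarrow> (nat \<Rightarrow> int) \<Rightarrow> nat \<Rightarrow> int" where
  "frak_b p n b s = (\<Sum>i=1..n. int (digit p (n - i) s) * int p ^ (n - i) * b i)"

definition frak_a :: "nat \<Rightarrow> nat \<Rightarrow> (nat \<Rightarrow> int) \<Rightarrow> int \<Rightarrow> nat" where
  "frak_a p n b t = (THE s. s < p ^ n \<and> frak_b p n b s mod (int p ^ n) = (- t) mod (int p ^ n))"

text \<open>Action of an element \<Psi> = \<Sum> \<Psi>(\<sigma>) \<sigma> of K[G] on L.\<close>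
definition grp_act :: "('a \<Rightarrow> 'a) set \<Rightarrow> (('a \<Rightarrow> 'a) \<Rightarrow> 'a) \<Rightarrow> 'a \<Rightarrow> 'a::field" where
  "grp_act G \<Psi> x = (\<Sum>\<sigma>\<in>G. \<Psi> \<sigma> * \<sigma> x)"

text \<open>x \<equiv> y mod (element of valuation s)\<cdot>P_L^T; for T = \<infinity> this is equality.\<close>
definition cong_tol :: "('a::field \<Rightarrow> int) \<Rightarrow> enat \<Rightarrow> int \<Rightarrow> 'a \<Rightarrow> 'a \<Rightarrow> bool" where
  "cong_tol vL T s x y \<longleftrightarrow> x = y \<or> (\<exists>T'. T = enat T' \<and> vL (x - y) \<ge> s + int T')"

definition scaffold :: "'a::field set \<Rightarrow> ('a \<Rightarrow> int) \<Rightarrow> nat \<Rightarrow> nat \<Rightarrow> (nat \<Rightarrow> int) \<Rightarrow> enat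
     \<Rightarrow> (int \<Rightarrow> 'a) \<Rightarrow> (nat \<Rightarrow> ('a \<Rightarrow> 'a) \<Rightarrow> 'a) \<Rightarrow> bool" where
  "scaffold K vL p n b T lam Psi \<longleftrightarrow>
     T \<ge> 1 \<and>
     (\<forall>i\<in>{1..n}. \<not> int p dvd b i) \<and>
     (\<forall>t. lam t \<noteq> 0 \<and> vL (lam t) = t) \<and>
     (\<forall>t1 t2. t1 mod (int p ^ n) = t2 mod (int p ^ n) \<longrightarrow> lam t1 * inverse (lam t2) \<in> K) \<and>
     (\<forall>i\<in>{1..n}. (\<forall>\<sigma>\<in>gal K. Psi i \<sigma> \<in> K) \<and> grp_act (gal K) (Psi i) 1 = 0 \<and>
        (\<forall>t. \<exists>u. u \<in> K \<and> u \<noteq> 0 \<and> vL u = 0 \<and>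
           (let s = t + int p ^ (n - i) * b i in
             (if digit p (n - i) (frak_a p n b t) \<ge> 1
              then cong_tol vL T s (grp_act (gal K) (Psi i) (lam t)) (u * lam s)
              else cong_tol vL T s (grp_act (gal K) (Psi i) (lam t)) 0))))"

definition galois_scaffold :: "'a::field set \<Rightarrow> ('a \<Rightarrow> int) \<Rightarrow> nat \<Rightarrow> nat \<Rightarrow> enat \<Rightarrow> bool" where
  "galois_scaffold K vL p n T \<longleftrightarrow>
     (\<exists>lam Psi. scaffold K vL p n (lower_break K vL p n) T lam Psi)"

end

theory Submission
  imports Defs "HOL-Algebra.Multiplicative_Group"
begin


definition vge :: "('a::field \<Rightarrow> int) \<Rightarrow> 'a \<Rightarrow> int \<Rightarrow> bool" where
  "vge v x m \<longleftrightarrow> x = 0 \<or> m \<le> v x"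

locale dval =
  fixes v :: "'a::field \<Rightarrow> int"
  assumes nd: "normalized_dval v"
begin

lemma vmult: "x \<noteq> 0 \<Longrightarrow> y \<noteq> 0 \<Longrightarrow> v (x * y) = v x + v y"
  using nd unfolding normalized_dval_def by blast

lemma vadd: "x \<noteq> 0 \<Longrightarrow> y \<noteq> 0 \<Longrightarrow> x + y \<noteq> 0 \<Longrightarrow> v (x + y) \<ge> min (v x) (v y)"
  using nd unfolding normalized_dval_def by blast

lemma vsurj: "\<exists>x. x \<noteq> 0 \<and> v x = m"
  using nd unfolding normalized_dval_def by blast

lemma v1[simp]: "v 1 = 0"
  using vmult[of 1 1] by simp

lemma vm1[simp]: "v (-1) = 0"
  using vmult[of "-1" "-1"] by simp

lemma vuminus[simp]: "v (- x) = v x"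
proof (cases "x = 0")
  case False
  then show ?thesis using vmult[of "-1" x] by simp
qed simp

lemma vinv: "x \<noteq> 0 \<Longrightarrow> v (inverse x) = - v x"
  using vmult[of x "inverse x"] by simp

lemma vdiv: "x \<noteq> 0 \<Longrightarrow> y \<noteq> 0 \<Longrightarrow> v (x / y) = v x - v y"
  by (simp add: divide_inverse vmult vinv)

lemma vpow: "x \<noteq> 0 \<Longrightarrow> v (x ^ n) = int n * v x"
  by (induction n) (auto simp: vmult algebra_simps)

lemma vge_0[simp]: "vge v 0 m" by (simp add: vge_def)

lemma vge_mono: "vge v x m \<Longrightarrow> m' \<le> m \<Longrightarrow> vge v x m'"
  by (auto simp: vge_def)

lemma vge_add: "vge v x m \<Longrightarrow> vge v y m \<Longrightarrow> vge v (x + y) m"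
  unfolding vge_def using vadd[of x y] by force

lemma vge_uminus: "vge v (- x) m = vge v x m"
  by (simp add: vge_def)

lemma vge_diff: "vge v x m \<Longrightarrow> vge v y m \<Longrightarrow> vge v (x - y) m"
  using vge_add[of x m "-y"] by (simp add: vge_uminus)

lemma vge_mult: "vge v x m \<Longrightarrow> vge v y n \<Longrightarrow> vge v (x * y) (m + n)"
  unfolding vge_def by (cases "x = 0"; cases "y = 0") (auto simp: vmult)

lemma vge_sum: "finite S \<Longrightarrow> (\<And>i. i \<in> S \<Longrightarrow> vge v (f i) m) \<Longrightarrow> vge v (sum f S) m"
  by (induction S rule: finite_induct) (simp_all add: vge_add)

lemma vge_1: "vge v 1 0" by (simp add: vge_def)

lemma vge_of_nat: "vge v (of_nat n) 0"
proof (induction n)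
  case (Suc n) then show ?case using vge_add[OF vge_1 Suc] by (simp add: add.commute)
qed simp

lemma vge_of_int: "vge v (of_int n) 0"
proof (cases "n \<ge> 0")
  case True then have "n = int (nat n)" by simp
  then obtain k where "n = int k" by blast
  then show ?thesis using vge_of_nat[of k] by simp
next
  case False then have "n = - int (nat (-n))" by simp
  then obtain k where "n = - int k" by blast
  then show ?thesis using vge_of_nat[of k] by (simp add: vge_uminus)
qed

lemma vge_pow: "vge v x m \<Longrightarrow> vge v (x ^ n) (int n * m)"
proof (induction n)
  case 0 then show ?case by (simp add: vge_1)
next
  case (Suc n)
  then have "vge v (x * x ^ n) (m + int n * m)" using vge_mult by blast
  then show ?case by (simp add: algebra_simps)
qed

lemma vge_prod: "finite S \<Longrightarrow> (\<And>i. i \<in> S \<Longrightarrow> vge v (f i) m) \<Longrightarrow> vge v (prod f S) (int (card S) * m)"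
proof (induction S rule: finite_induct)
  case empty then show ?case by (simp add: vge_1)
next
  case (insert a S)
  then have "vge v (f a * prod f S) (m + int (card S) * m)" using vge_mult by blast
  then show ?case using insert by (simp add: algebra_simps)
qed

lemma vge_self: "vge v x (v x)" by (simp add: vge_def)

lemma v_add_strict:
  assumes "x \<noteq> 0" "vge v y (v x + 1)"
  shows "x + y \<noteq> 0 \<and> v (x + y) = v x"
proof (cases "y = 0")
  case True then show ?thesis using assms by simp
next
  case False
  then have y: "v y > v x" using assms by (simp add: vge_def)
  have ne: "x + y \<noteq> 0"
  proof
    assume "x + y = 0" then have "- x = y" by (simp add: neg_eq_iff_add_eq_0)
    then have "y = - x" by simp
    then show False using y by simp
  qed
  have "v (x + y) \<ge> v x" using vadd[OF assms(1) False ne] y by simp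
  moreover have "v x \<ge> min (v (x + y)) (v (- y))"
    using vadd[OF ne, of "-y"] False assms(1) by simp
  ultimately show ?thesis using ne y by auto
qed

lemma v_add_distinct:
  assumes "x \<noteq> 0" "y \<noteq> 0" "v x \<noteq> v y"
  shows "x + y \<noteq> 0 \<and> v (x + y) = min (v x) (v y)"
proof (cases "v x < v y")
  case True
  then show ?thesis using v_add_strict[of x y] assms by (simp add: vge_def)
next
  case False
  then have "v y < v x" using assms by simp
  then have "y + x \<noteq> 0 \<and> v (y + x) = v y" using v_add_strict[of y x] assms by (simp add: vge_def)
  then show ?thesis using \<open>v y < v x\<close> by (simp add: add.commute)
qed

lemma sum_distinct_val:
  assumes "finite S" "S \<noteq> {}" "\<And>i. i \<in> S \<Longrightarrow> f i \<noteq> 0"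
    "\<And>i j. i \<in> S \<Longrightarrow> j \<in> S \<Longrightarrow> i \<noteq> j \<Longrightarrow> v (f i) \<noteq> v (f j)"
  shows "sum f S \<noteq> 0 \<and> v (sum f S) = Min ((\<lambda>i. v (f i)) ` S)"
  using assms
proof (induction S rule: finite_ne_induct)
  case (singleton x) then show ?case by simp
next
  case (insert a S)
  have IH: "sum f S \<noteq> 0" "v (sum f S) = Min ((\<lambda>i. v (f i)) ` S)"
    using insert.IH insert.prems by auto
  have "Min ((\<lambda>i. v (f i)) ` S) \<in> (\<lambda>i. v (f i)) ` S" using insert(1,2) by (intro Min_in) auto
  then obtain j where j: "j \<in> S" "Min ((\<lambda>i. v (f i)) ` S) = v (f j)" by blast
  have "a \<noteq> j" using j insert(3) by blast
  then have "v (f a) \<noteq> v (f j)" using insert.prems(2) j(1) by blast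
  then have "v (f a) \<noteq> v (sum f S)" using IH(2) j by simp
  then have *: "f a + sum f S \<noteq> 0 \<and> v (f a + sum f S) = min (v (f a)) (v (sum f S))"
    using v_add_distinct insert.prems(1) IH by blast
  have "Min ((\<lambda>i. v (f i)) ` insert a S) = min (v (f a)) (Min ((\<lambda>i. v (f i)) ` S))"
    using insert(1,2) by (simp add: Min_insert)
  then show ?case using * insert(1,3) IH(2) by simp
qed

end


definition spanK :: "'a::field set \<Rightarrow> 'a set \<Rightarrow> 'a set" where
  "spanK K B = {x. \<exists>c. (\<forall>b\<in>B. c b \<in> K) \<and> x = (\<Sum>b\<in>B. c b * b)}"

context
  fixes K :: "'a::field set"
  assumes sub: "subfield K"
begin

lemma K0: "0 \<in> K" and K1: "1 \<in> K" using sub unfolding subfield_def by auto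
lemma Kadd: "x \<in> K \<Longrightarrow> y \<in> K \<Longrightarrow> x + y \<in> K" using sub unfolding subfield_def by auto
lemma Kdiff: "x \<in> K \<Longrightarrow> y \<in> K \<Longrightarrow> x - y \<in> K" using sub unfolding subfield_def by auto
lemma Kmult: "x \<in> K \<Longrightarrow> y \<in> K \<Longrightarrow> x * y \<in> K" using sub unfolding subfield_def by auto
lemma Kinv: "x \<in> K \<Longrightarrow> inverse x \<in> K"
  using sub unfolding subfield_def by (cases "x = 0") auto
lemma Kuminus: "x \<in> K \<Longrightarrow> - x \<in> K" using Kdiff[OF K0] by simp
lemma Kdivide: "x \<in> K \<Longrightarrow> y \<in> K \<Longrightarrow> x / y \<in> K" by (simp add: divide_inverse Kmult Kinv)
lemma Kpow: "x \<in> K \<Longrightarrow> x ^ n \<in> K" by (induction n) (simp_all add: K1 Kmult)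
lemma Ksum: "(\<And>i. i \<in> S \<Longrightarrow> f i \<in> K) \<Longrightarrow> sum f S \<in> K"
  by (induction S rule: infinite_finite_induct) (simp_all add: K0 Kadd)
lemma Kprod: "(\<And>i. i \<in> S \<Longrightarrow> f i \<in> K) \<Longrightarrow> prod f S \<in> K"
  by (induction S rule: infinite_finite_induct) (simp_all add: K1 Kmult)
lemma Kof_nat: "of_nat n \<in> K" by (induction n) (simp_all add: K0 K1 Kadd)
lemma Kof_int: "of_int n \<in> K"
proof (cases "n \<ge> 0")
  case True then have "of_int n = (of_nat (nat n) :: 'a)" by (simp add: of_nat_nat)
  then show ?thesis using Kof_nat[of "nat n"] by simp
next
  case False then have "of_int n = - (of_nat (nat (-n)) :: 'a)" by (simp add: of_nat_nat)
  then show ?thesis using Kuminus[OF Kof_nat[of "nat (-n)"]] by simp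
qed

lemma span_add: "x \<in> spanK K B \<Longrightarrow> y \<in> spanK K B \<Longrightarrow> x + y \<in> spanK K B"
proof -
  assume "x \<in> spanK K B" "y \<in> spanK K B"
  then obtain c d where c: "\<forall>b\<in>B. c b \<in> K" "x = (\<Sum>b\<in>B. c b * b)"
    and d: "\<forall>b\<in>B. d b \<in> K" "y = (\<Sum>b\<in>B. d b * b)" unfolding spanK_def by blast
  have "x + y = (\<Sum>b\<in>B. (c b + d b) * b)" using c d by (simp add: sum.distrib distrib_right)
  moreover have "\<forall>b\<in>B. c b + d b \<in> K" using c d Kadd by blast
  ultimately show ?thesis unfolding spanK_def by (intro CollectI exI[of _ "\<lambda>b. c b + d b"]) simp
qed

lemma span_smult: "a \<in> K \<Longrightarrow> x \<in> spanK K B \<Longrightarrow> a * x \<in> spanK K B"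
proof -
  assume a: "a \<in> K" and "x \<in> spanK K B"
  then obtain c where c: "\<forall>b\<in>B. c b \<in> K" "x = (\<Sum>b\<in>B. c b * b)" unfolding spanK_def by blast
  have "a * x = (\<Sum>b\<in>B. (a * c b) * b)" using c by (simp add: sum_distrib_left mult.assoc)
  moreover have "\<forall>b\<in>B. a * c b \<in> K" using c a Kmult by blast
  ultimately show ?thesis unfolding spanK_def by (intro CollectI exI[of _ "\<lambda>b. a * c b"]) simp
qed

lemma span_diff: "x \<in> spanK K B \<Longrightarrow> y \<in> spanK K B \<Longrightarrow> x - y \<in> spanK K B"
  using span_add[of x B "(-1) * y"] span_smult[OF Kuminus[OF K1]] by simp

lemma dependent:
  assumes "finite B" "finite I" "card I > card B" "\<forall>j\<in>I. w j \<in> spanK K B"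
  shows "\<exists>\<beta>. (\<forall>j\<in>I. \<beta> j \<in> K) \<and> (\<Sum>j\<in>I. \<beta> j * w j) = 0 \<and> (\<exists>j\<in>I. \<beta> j \<noteq> 0)"
  using assms
proof (induction B arbitrary: I w rule: finite_induct)
  case empty
  then obtain j0 where j0: "j0 \<in> I" by fastforce
  have w0: "\<forall>j\<in>I. w j = 0" using empty.prems unfolding spanK_def by simp
  let ?\<beta> = "\<lambda>j. if j = j0 then (1::'a) else 0"
  have "(\<Sum>j\<in>I. ?\<beta> j * w j) = 0" using w0 by simp
  moreover have "\<forall>j\<in>I. ?\<beta> j \<in> K" using K0 K1 by simp
  ultimately show ?case using j0 by (intro exI[of _ ?\<beta>]) auto
next
  case (insert b B)
  have "\<forall>j\<in>I. \<exists>ar. fst ar \<in> K \<and> snd ar \<in> spanK K B \<and> w j = fst ar * b + snd ar"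
  proof
    fix j assume "j \<in> I"
    then obtain c where c: "\<forall>x\<in>insert b B. c x \<in> K" "w j = (\<Sum>x\<in>insert b B. c x * x)"
      using insert.prems unfolding spanK_def by blast
    have "w j = c b * b + (\<Sum>x\<in>B. c x * x)" using c insert.hyps by simp
    moreover have "(\<Sum>x\<in>B. c x * x) \<in> spanK K B" using c unfolding spanK_def
      by (intro CollectI exI[of _ c]) simp
    ultimately show "\<exists>ar. fst ar \<in> K \<and> snd ar \<in> spanK K B \<and> w j = fst ar * b + snd ar"
      using c by (intro exI[of _ "(c b, \<Sum>x\<in>B. c x * x)"]) auto
  qed
  from bchoice[OF this] obtain ar where ar: "\<forall>j\<in>I. fst (ar j) \<in> K \<and> snd (ar j) \<in> spanK K B \<and> w j = fst (ar j) * b + snd (ar j)"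
    by blast
  define \<alpha> where "\<alpha> j = fst (ar j)" for j
  define r where "r j = snd (ar j)" for j
  have ar': "\<And>j. j \<in> I \<Longrightarrow> \<alpha> j \<in> K \<and> r j \<in> spanK K B \<and> w j = \<alpha> j * b + r j"
    using ar unfolding \<alpha>_def r_def by blast
  have cardB: "card (insert b B) = card B + 1" using insert.hyps by simp
  show ?case
  proof (cases "\<forall>j\<in>I. \<alpha> j = 0")
    case True
    then have "\<forall>j\<in>I. w j \<in> spanK K B" using ar' by simp
    then show ?thesis using insert.IH[of I w] insert.prems cardB by simp
  next
    case False
    then obtain k where k: "k \<in> I" "\<alpha> k \<noteq> 0" by blast
    define I' where "I' = I - {k}"
    define w' where "w' j = w j - (\<alpha> j / \<alpha> k) * w k" for j
    have fI': "finite I'" using insert.prems I'_def by simp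
    have cI': "card I' > card B" using insert.prems cardB k unfolding I'_def by (simp add: card_Diff_singleton)
    have "\<forall>j\<in>I'. w' j \<in> spanK K B"
    proof
      fix j assume j: "j \<in> I'"
      then have jI: "j \<in> I" unfolding I'_def by simp
      have wj: "w' j = r j - (\<alpha> j / \<alpha> k) * r k"
        using ar'[OF jI] ar'[OF k(1)] k(2) unfolding w'_def by (simp add: field_simps)
      have "\<alpha> j / \<alpha> k \<in> K" using ar'[OF jI] ar'[OF k(1)] Kdivide by blast
      then have "(\<alpha> j / \<alpha> k) * r k \<in> spanK K B" using ar'[OF k(1)] span_smult by blast
      then show "w' j \<in> spanK K B" using wj ar'[OF jI] span_diff by simp
    qed
    then obtain \<beta>' where \<beta>': "\<forall>j\<in>I'. \<beta>' j \<in> K" "(\<Sum>j\<in>I'. \<beta>' j * w' j) = 0" "\<exists>j\<in>I'. \<beta>' j \<noteq> 0"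
      using insert.IH[OF fI' cI'] by blast
    define s where "s = (\<Sum>j\<in>I'. \<beta>' j * (\<alpha> j / \<alpha> k))"
    define \<beta> where "\<beta> j = (if j = k then - s else \<beta>' j)" for j
    have sK: "s \<in> K" unfolding s_def using \<beta>' ar' Kmult Kdivide k unfolding I'_def
      by (intro Ksum) auto
    have "(\<Sum>j\<in>I'. \<beta>' j * w j) = (\<Sum>j\<in>I'. \<beta>' j * w' j + (\<beta>' j * (\<alpha> j / \<alpha> k)) * w k)"
      unfolding w'_def by (intro sum.cong) (simp_all add: algebra_simps)
    also have "\<dots> = s * w k" using \<beta>'(2) unfolding s_def by (simp add: sum.distrib sum_distrib_right)
    finally have eq: "(\<Sum>j\<in>I'. \<beta>' j * w j) = s * w k" .
    have "(\<Sum>j\<in>I. \<beta> j * w j) = \<beta> k * w k + (\<Sum>j\<in>I'. \<beta> j * w j)"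
      using k insert.prems(1) unfolding I'_def by (simp add: sum.remove)
    also have "(\<Sum>j\<in>I'. \<beta> j * w j) = (\<Sum>j\<in>I'. \<beta>' j * w j)"
      unfolding \<beta>_def I'_def by (intro sum.cong) auto
    finally have "(\<Sum>j\<in>I. \<beta> j * w j) = 0" using eq unfolding \<beta>_def by simp
    moreover have "\<forall>j\<in>I. \<beta> j \<in> K" using \<beta>' sK Kuminus unfolding \<beta>_def I'_def by auto
    moreover have "\<exists>j\<in>I. \<beta> j \<noteq> 0" using \<beta>'(3) unfolding \<beta>_def I'_def by auto
    ultimately show ?thesis by blast
  qed
qed

lemma spanning:
  assumes deg: "field_degree K n"
    and indep: "\<And>c. (\<forall>i<n. c i \<in> K) \<Longrightarrow> (\<Sum>i<n. c i * e i) = 0 \<Longrightarrow> \<forall>i<n. c i = 0"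
  shows "\<exists>c. (\<forall>i<n. c i \<in> K) \<and> y = (\<Sum>i<n. c i * e i)"
proof -
  obtain B where B: "finite B" "card B = n" "\<forall>x. \<exists>c. (\<forall>b\<in>B. c b \<in> K) \<and> x = (\<Sum>b\<in>B. c b * b)"
    using deg unfolding field_degree_def by blast
  define w where "w i = (if i = n then y else e i)" for i
  have "\<forall>j\<in>{..n}. w j \<in> spanK K B"
  proof
    fix j
    obtain c where "(\<forall>b\<in>B. c b \<in> K) \<and> w j = (\<Sum>b\<in>B. c b * b)" using B(3) by blast
    then show "w j \<in> spanK K B" unfolding spanK_def by (intro CollectI exI[of _ c]) simp
  qed
  then have "\<exists>\<beta>. (\<forall>j\<in>{..n}. \<beta> j \<in> K) \<and> (\<Sum>j\<in>{..n}. \<beta> j * w j) = 0 \<and> (\<exists>j\<in>{..n}. \<beta> j \<noteq> 0)"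
    using dependent[OF B(1), of "{..n}" w] B(2) by simp
  then obtain \<beta> where \<beta>: "\<forall>j\<in>{..n}. \<beta> j \<in> K" "(\<Sum>j\<in>{..n}. \<beta> j * w j) = 0" "\<exists>j\<in>{..n}. \<beta> j \<noteq> 0"
    by blast
  have s: "(\<Sum>j\<in>{..n}. \<beta> j * w j) = \<beta> n * y + (\<Sum>i<n. \<beta> i * e i)"
    unfolding w_def by (simp add: lessThan_Suc_atMost[symmetric])
  show ?thesis
  proof (cases "\<beta> n = 0")
    case True
    then have "(\<Sum>i<n. \<beta> i * e i) = 0" using s \<beta>(2) by simp
    moreover have "\<forall>i<n. \<beta> i \<in> K" using \<beta>(1) by simp
    ultimately have "\<forall>i<n. \<beta> i = 0" using indep[of \<beta>] by blast
    moreover obtain j where "j \<le> n" "\<beta> j \<noteq> 0" using \<beta>(3) by auto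
    ultimately show ?thesis using True by (cases "j = n") auto
  next
    case False
    define c where "c i = - \<beta> i / \<beta> n" for i
    have "\<beta> n * y = - (\<Sum>i<n. \<beta> i * e i)" using s \<beta>(2) by (simp add: eq_neg_iff_add_eq_0)
    then have "y = - (\<Sum>i<n. \<beta> i * e i) / \<beta> n"
      using False by (metis nonzero_mult_div_cancel_left)
    also have "\<dots> = (\<Sum>i<n. - (\<beta> i * e i) / \<beta> n)" by (simp add: sum_divide_distrib sum_negf)
    also have "\<dots> = (\<Sum>i<n. c i * e i)" unfolding c_def by (intro sum.cong) (simp_all add: field_simps)
    finally have "y = (\<Sum>i<n. c i * e i)" .
    moreover have "\<forall>i<n. c i \<in> K" using \<beta>(1) Kdivide Kuminus unfolding c_def by simp
    ultimately show ?thesis by blast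
  qed
qed

end


context dval begin
lemma lead_sum:
  assumes "finite S" "r \<in> S" "f r \<noteq> 0" "\<And>i. i \<in> S - {r} \<Longrightarrow> vge v (f i) (v (f r) + 1)"
  shows "sum f S \<noteq> 0 \<and> v (sum f S) = v (f r)"
proof -
  have "sum f S = f r + sum f (S - {r})" using assms(1,2) by (simp add: sum.remove)
  moreover have "vge v (sum f (S - {r})) (v (f r) + 1)" using assms(1,4) by (intro vge_sum) auto
  ultimately show ?thesis using v_add_strict[OF assms(3)] by simp
qed
end

locale ctx = dval vL for vL :: "'a::field \<Rightarrow> int" +
  fixes K :: "'a set" and vK :: "'a \<Rightarrow> int" and p :: nat
  assumes sub: "subfield K" and ndK: "normalized_dval_on K vK" and pr: "prime p"
    and rc: "residue_char K vK p" and galdeg: "galois_of_degree K p"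
    and tr: "totally_ramified K vK vL p"
begin

lemmas K0' = K0[OF sub] and K1' = K1[OF sub] and Kadd' = Kadd[OF sub] and Kdiff' = Kdiff[OF sub]
  and Kmult' = Kmult[OF sub] and Kinv' = Kinv[OF sub] and Kuminus' = Kuminus[OF sub]
  and Kdivide' = Kdivide[OF sub] and Kpow' = Kpow[OF sub] and Ksum' = Ksum[OF sub]
  and Kprod' = Kprod[OF sub] and Kof_nat' = Kof_nat[OF sub] and Kof_int' = Kof_int[OF sub]

lemma p_gt1: "p > 1" using pr prime_gt_1_nat by blast
lemma p_pos: "p > 0" using p_gt1 by simp

lemma vLK: "x \<in> K \<Longrightarrow> x \<noteq> 0 \<Longrightarrow> vL x = int p * vK x"
  using tr unfolding totally_ramified_def by blast

lemma Kdvd: "x \<in> K \<Longrightarrow> x \<noteq> 0 \<Longrightarrow> int p dvd vL x"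
  using vLK by simp

lemma piK_ex: "\<exists>x\<in>K. x \<noteq> 0 \<and> vL x = int p"
proof -
  obtain x where "x \<in> K" "x \<noteq> 0" "vK x = 1" using ndK unfolding normalized_dval_on_def by blast
  then show ?thesis using vLK by (intro bexI[of _ x]) auto
qed

definition "piK = (SOME x. x \<in> K \<and> x \<noteq> 0 \<and> vL x = int p)"
lemma piK: "piK \<in> K" "piK \<noteq> 0" "vL piK = int p"
  using someI_ex[of "\<lambda>x. x \<in> K \<and> x \<noteq> 0 \<and> vL x = int p"] piK_ex unfolding piK_def by auto

definition "pL = (SOME x. x \<noteq> 0 \<and> vL x = 1)"
lemma pL: "pL \<noteq> 0" "vL pL = 1"
  using someI_ex[of "\<lambda>x. x \<noteq> 0 \<and> vL x = 1"] vsurj[of 1] unfolding pL_def by auto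

lemma vge_p: "vge vL (of_nat p) 1"
proof (cases "(of_nat p :: 'a) = 0")
  case False
  then have "0 < vK (of_nat p)" using rc unfolding residue_char_def max_ideal_def by auto
  then have "1 * 1 \<le> int p * vK (of_nat p)" using p_pos by (intro mult_mono) auto
  then show ?thesis using vLK[OF Kof_nat' False] by (simp add: vge_def)
qed (simp add: vge_def)

lemma unit_nat:
  assumes "\<not> p dvd i"
  shows "(of_nat i :: 'a) \<noteq> 0 \<and> vL (of_nat i) = 0"
proof -
  obtain x y where xy: "i * x = Suc (p * y)" using bezout_prime[OF pr assms] by blast
  then have eq: "(of_nat i :: 'a) * of_nat x = 1 + of_nat p * of_nat y"
    by (metis of_nat_Suc of_nat_mult)
  have "vge vL (of_nat p * of_nat y :: 'a) (1 + 0)" using vge_mult[OF vge_p vge_of_nat] by simp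
  then have h: "(1::'a) + of_nat p * of_nat y \<noteq> 0 \<and> vL (1 + of_nat p * of_nat y :: 'a) = 0"
    using v_add_strict[of 1 "of_nat p * of_nat y"] by simp
  then have nz: "(of_nat i :: 'a) \<noteq> 0" using eq by auto
  have "vL (of_nat i :: 'a) \<ge> 0" using vge_of_nat[of i] nz by (simp add: vge_def)
  moreover have "vL (of_nat x :: 'a) \<ge> 0" using vge_of_nat[of x] h eq by (auto simp: vge_def)
  moreover have "vL (of_nat i :: 'a) + vL (of_nat x) = 0"
  proof -
    have nzx: "(of_nat x :: 'a) \<noteq> 0" using eq h by auto
    have "vL (of_nat i :: 'a) + vL (of_nat x) = vL (of_nat i * of_nat x :: 'a)" using vmult nz nzx by simp
    also have "\<dots> = 0" using eq h by simp
    finally show ?thesis .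
  qed
  ultimately show ?thesis using nz by simp
qed

end


context ctx begin

lemma term_val: "c \<in> K \<Longrightarrow> c \<noteq> 0 \<Longrightarrow> c * pL ^ i \<noteq> 0 \<and> vL (c * pL ^ i) = vL c + int i"
  using pL by (simp add: vmult vpow)

lemma distinct_terms:
  assumes "c \<in> K" "c \<noteq> 0" "d \<in> K" "d \<noteq> 0" "i < p" "j < p" "vL c + int i = vL d + int j"
  shows "i = j"
proof (rule ccontr)
  assume ne: "i \<noteq> j"
  have "int p dvd vL c" "int p dvd vL d" using Kdvd assms by auto
  then have "int p dvd (vL c - vL d)" by (rule dvd_diff)
  moreover have "int j - int i = vL c - vL d" using assms(7) by linarith
  ultimately have "int p dvd (int j - int i)" by simp
  moreover have "int j - int i \<noteq> 0" using ne by simp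
  ultimately have "\<bar>int p\<bar> \<le> \<bar>int j - int i\<bar>" using dvd_imp_le_int by blast
  then show False using assms(5,6) by linarith
qed

lemma expand_val:
  assumes "\<forall>i<p. c i \<in> K" "S = {i. i < p \<and> c i \<noteq> 0}" "S \<noteq> {}"
  shows "(\<Sum>i<p. c i * pL ^ i) \<noteq> 0 \<and> vL (\<Sum>i<p. c i * pL ^ i) = Min ((\<lambda>i. vL (c i * pL ^ i)) ` S)"
proof -
  have fS: "finite S" using assms(2) by simp
  have "(\<Sum>i<p. c i * pL ^ i) = (\<Sum>i\<in>S. c i * pL ^ i)"
    using assms(2) by (intro sum.mono_neutral_right) auto
  moreover have "(\<Sum>i\<in>S. c i * pL ^ i) \<noteq> 0 \<and> vL (\<Sum>i\<in>S. c i * pL ^ i) = Min ((\<lambda>i. vL (c i * pL ^ i)) ` S)"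
  proof (rule sum_distinct_val[OF fS assms(3)])
    fix i assume "i \<in> S" then show "c i * pL ^ i \<noteq> 0" using assms term_val by auto
  next
    fix i j assume ij: "i \<in> S" "j \<in> S" "i \<noteq> j"
    show "vL (c i * pL ^ i) \<noteq> vL (c j * pL ^ j)"
      using ij assms term_val distinct_terms[of "c i" "c j" i j] by auto
  qed
  ultimately show ?thesis by simp
qed

lemma indep_pL: "\<forall>i<p. c i \<in> K \<Longrightarrow> (\<Sum>i<p. c i * pL ^ i) = 0 \<Longrightarrow> \<forall>i<p. c i = 0"
  using expand_val[of c "{i. i < p \<and> c i \<noteq> 0}"] by auto

lemma span_pL: "\<exists>c. (\<forall>i<p. c i \<in> K) \<and> y = (\<Sum>i<p. c i * pL ^ i)"
  using spanning[OF sub, of p "\<lambda>i. pL ^ i" y] galdeg indep_pL unfolding galois_of_degree_def by blast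

definition "co y = (SOME c. (\<forall>i<p. c i \<in> K) \<and> y = (\<Sum>i<p. c i * pL ^ i))"

lemma co: "\<forall>i<p. co y i \<in> K" "y = (\<Sum>i<p. co y i * pL ^ i)"
  using someI_ex[OF span_pL[of y]] unfolding co_def by auto

lemma lead:
  assumes "y \<noteq> 0"
  defines "r \<equiv> nat (vL y mod int p)"
  shows "r < p \<and> co y r \<noteq> 0 \<and> vL (co y r * pL ^ r) = vL y
    \<and> (\<forall>i<p. i \<noteq> r \<longrightarrow> vge vL (co y i * pL ^ i) (vL y + 1))"
proof -
  define S where "S = {i. i < p \<and> co y i \<noteq> 0}"
  have fS: "finite S" unfolding S_def by simp
  have Sne: "S \<noteq> {}"
  proof
    assume "S = {}"
    then have "\<forall>i<p. co y i = 0" unfolding S_def by auto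
    then show False using co(2)[of y] assms(1) by simp
  qed
  have vy: "vL y = Min ((\<lambda>i. vL (co y i * pL ^ i)) ` S)"
    using expand_val[OF co(1) S_def Sne] co(2)[of y] by simp
  have "Min ((\<lambda>i. vL (co y i * pL ^ i)) ` S) \<in> (\<lambda>i. vL (co y i * pL ^ i)) ` S"
    using fS Sne by (intro Min_in) auto
  then obtain j where j: "j \<in> S" "vL (co y j * pL ^ j) = vL y" using vy by auto
  have jK: "co y j \<in> K" "co y j \<noteq> 0" "j < p" using j co(1) unfolding S_def by auto
  have "vL y = vL (co y j) + int j" using j term_val jK by simp
  moreover have "int p dvd vL (co y j)" using Kdvd jK by simp
  ultimately have "vL y mod int p = int j" using jK(3) by (auto simp: mod_add_left_eq[symmetric])
  then have jr: "j = r" unfolding r_def by simp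
  have others: "\<forall>i<p. i \<noteq> r \<longrightarrow> vge vL (co y i * pL ^ i) (vL y + 1)"
  proof (intro allI impI)
    fix i assume i: "i < p" "i \<noteq> r"
    show "vge vL (co y i * pL ^ i) (vL y + 1)"
    proof (cases "co y i = 0")
      case False
      then have iS: "i \<in> S" using i unfolding S_def by simp
      have "vL (co y i * pL ^ i) \<ge> vL y" using vy fS iS by simp
      moreover have "vL (co y i * pL ^ i) \<noteq> vL (co y j * pL ^ j)"
        using term_val[of "co y i" i] term_val jK distinct_terms[of "co y i" "co y j" i j] co(1) i False jr
        by auto
      ultimately show ?thesis using j by (simp add: vge_def)
    qed simp
  qed
  show ?thesis using jr jK j others by simp
qed

end


context
  fixes K :: "'a::field set" and \<sigma> :: "'a \<Rightarrow> 'a"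
  assumes sg: "\<sigma> \<in> gal K"
begin
lemma g_add: "\<sigma> (x + y) = \<sigma> x + \<sigma> y" using sg unfolding gal_def by blast
lemma g_mult: "\<sigma> (x * y) = \<sigma> x * \<sigma> y" using sg unfolding gal_def by blast
lemma g_one: "\<sigma> 1 = 1" using sg unfolding gal_def by blast
lemma g_K: "k \<in> K \<Longrightarrow> \<sigma> k = k" using sg unfolding gal_def by blast
lemma g_bij: "bij \<sigma>" using sg unfolding gal_def by blast
lemma g_zero: "\<sigma> 0 = 0"
proof -
  have "\<sigma> 0 + \<sigma> 0 = \<sigma> 0 + 0" using g_add[of 0 0] by simp
  then show ?thesis by (rule add_left_imp_eq)
qed
lemma g_uminus: "\<sigma> (- x) = - \<sigma> x"
proof -
  have "\<sigma> (- x) + \<sigma> x = 0" using g_add[of "-x" x] g_zero by simp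
  then show ?thesis by (simp add: eq_neg_iff_add_eq_0)
qed
lemma g_diff: "\<sigma> (x - y) = \<sigma> x - \<sigma> y" using g_add[of x "-y"] g_uminus[of y] by simp
lemma g_inj: "\<sigma> x = \<sigma> y \<Longrightarrow> x = y" using g_bij by (simp add: bij_def inj_eq)
lemma g_nz: "x \<noteq> 0 \<Longrightarrow> \<sigma> x \<noteq> 0" using g_inj[of x 0] g_zero by auto
lemma g_inverse: "\<sigma> (inverse x) = inverse (\<sigma> x)"
proof (cases "x = 0")
  case True then show ?thesis by (simp add: g_zero)
next
  case False
  then have "\<sigma> x * \<sigma> (inverse x) = 1" using g_mult[of x "inverse x"] g_one by simp
  then show ?thesis by (metis inverse_unique)
qed
lemma g_divide: "\<sigma> (x / y) = \<sigma> x / \<sigma> y" by (simp add: divide_inverse g_mult g_inverse)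
lemma g_pow: "\<sigma> (x ^ n) = \<sigma> x ^ n" by (induction n) (simp_all add: g_one g_mult)
lemma g_sum: "\<sigma> (sum f S) = (\<Sum>i\<in>S. \<sigma> (f i))"
  by (induction S rule: infinite_finite_induct) (simp_all add: g_zero g_add)
lemma g_prod: "\<sigma> (prod f S) = (\<Prod>i\<in>S. \<sigma> (f i))"
  by (induction S rule: infinite_finite_induct) (simp_all add: g_one g_mult)
lemma g_of_nat: "\<sigma> (of_nat n) = of_nat n" by (induction n) (simp_all add: g_zero g_one g_add)
end

lemma gal_id: "id \<in> gal K" unfolding gal_def by simp

lemma gal_comp: "\<sigma> \<in> gal K \<Longrightarrow> \<tau> \<in> gal K \<Longrightarrow> \<sigma> \<circ> \<tau> \<in> gal K"
  unfolding gal_def by (auto intro: bij_comp)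

lemma gal_inv: assumes "\<sigma> \<in> gal K" shows "inv_into UNIV \<sigma> \<in> gal K"
proof -
  have b: "bij \<sigma>" using g_bij[OF assms] .
  have si: "\<And>x. \<sigma> (inv_into UNIV \<sigma> x) = x" using b by (simp add: bij_is_surj surj_f_inv_f)
  have isi: "\<And>x. inv_into UNIV \<sigma> (\<sigma> x) = x" using b by (simp add: bij_is_inj inv_f_f)
  have "bij (inv_into UNIV \<sigma>)" using b by (simp add: bij_imp_bij_inv)
  moreover have "\<forall>x y. inv_into UNIV \<sigma> (x + y) = inv_into UNIV \<sigma> x + inv_into UNIV \<sigma> y"
  proof (intro allI)
    fix x y
    have "x + y = \<sigma> (inv_into UNIV \<sigma> x + inv_into UNIV \<sigma> y)" by (simp add: g_add[OF assms] si)
    then show "inv_into UNIV \<sigma> (x + y) = inv_into UNIV \<sigma> x + inv_into UNIV \<sigma> y" by (simp add: isi)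
  qed
  moreover have "\<forall>x y. inv_into UNIV \<sigma> (x * y) = inv_into UNIV \<sigma> x * inv_into UNIV \<sigma> y"
  proof (intro allI)
    fix x y
    have "x * y = \<sigma> (inv_into UNIV \<sigma> x * inv_into UNIV \<sigma> y)" by (simp add: g_mult[OF assms] si)
    then show "inv_into UNIV \<sigma> (x * y) = inv_into UNIV \<sigma> x * inv_into UNIV \<sigma> y" by (simp add: isi)
  qed
  moreover have "inv_into UNIV \<sigma> 1 = 1" using isi[of 1] g_one[OF assms] by simp
  moreover have "\<forall>k\<in>K. inv_into UNIV \<sigma> k = k" using isi g_K[OF assms] by metis
  ultimately show ?thesis unfolding gal_def by blast
qed

lemma gal_inv_comp: assumes "\<sigma> \<in> gal K" shows "inv_into UNIV \<sigma> \<circ> \<sigma> = id"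
proof -
  have "inj \<sigma>" using g_bij[OF assms] bij_is_inj by blast
  then show ?thesis by (simp add: fun_eq_iff)
qed

definition galG :: "'a::field set \<Rightarrow> ('a \<Rightarrow> 'a) monoid" where
  "galG K = \<lparr>carrier = gal K, mult = (\<circ>), one = id\<rparr>"

lemma galG_group: "group (galG K)"
proof (rule groupI)
  fix x y assume "x \<in> carrier (galG K)" "y \<in> carrier (galG K)"
  then show "x \<otimes>\<^bsub>galG K\<^esub> y \<in> carrier (galG K)" unfolding galG_def by (simp add: gal_comp)
next
  show "\<one>\<^bsub>galG K\<^esub> \<in> carrier (galG K)" unfolding galG_def by (simp add: gal_id)
next
  fix x y z show "x \<otimes>\<^bsub>galG K\<^esub> y \<otimes>\<^bsub>galG K\<^esub> z = x \<otimes>\<^bsub>galG K\<^esub> (y \<otimes>\<^bsub>galG K\<^esub> z)"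
    unfolding galG_def by (simp add: comp_assoc)
next
  fix x show "\<one>\<^bsub>galG K\<^esub> \<otimes>\<^bsub>galG K\<^esub> x = x" unfolding galG_def by simp
next
  fix x assume "x \<in> carrier (galG K)"
  then show "\<exists>y\<in>carrier (galG K). y \<otimes>\<^bsub>galG K\<^esub> x = \<one>\<^bsub>galG K\<^esub>"
    unfolding galG_def using gal_inv gal_inv_comp by fastforce
qed

lemma galG_pow: "x [^]\<^bsub>galG K\<^esub> n = x ^^ n"
  by (induction n) (simp_all add: galG_def funpow_Suc_right del: funpow.simps)

lemma gal_pow_card: "\<sigma> \<in> gal K \<Longrightarrow> \<sigma> ^^ card (gal K) = id"
  using group.pow_order_eq_1[OF galG_group[of K], where a=\<sigma>] galG_pow[where x=\<sigma> and K=K]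
  unfolding order_def galG_def by simp

lemma gal_funpow: "\<sigma> \<in> gal K \<Longrightarrow> \<sigma> ^^ n \<in> gal K"
  by (induction n) (simp_all add: gal_id gal_comp)

context ctx begin

lemma gexp: "\<sigma> \<in> gal K \<Longrightarrow> \<sigma> y = (\<Sum>i<p. co y i * (\<sigma> pL) ^ i)"
proof -
  assume s: "\<sigma> \<in> gal K"
  have "\<sigma> y = \<sigma> (\<Sum>i<p. co y i * pL ^ i)" using co(2)[of y] by simp
  also have "\<dots> = (\<Sum>i<p. co y i * (\<sigma> pL) ^ i)"
    using co(1)[of y] by (simp add: g_sum[OF s] g_mult[OF s] g_pow[OF s] g_K[OF s])
  finally show ?thesis .
qed

lemma eisen_coef: "i < p \<Longrightarrow> vge vL (co (pL ^ p) i) (int p)"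
proof -
  assume i: "i < p"
  have nz: "pL ^ p \<noteq> 0" and v: "vL (pL ^ p) = int p" using pL by (simp_all add: vpow)
  have r0: "nat (vL (pL ^ p) mod int p) = 0" using v by simp
  note L = lead[OF nz, unfolded r0]
  show ?thesis
  proof (cases "i = 0")
    case True
    then show ?thesis using L v by (simp add: vge_def)
  next
    case False
    show ?thesis
    proof (cases "co (pL ^ p) i = 0")
      case nc: False
      have cK: "co (pL ^ p) i \<in> K" using co(1) i by simp
      have "vge vL (co (pL ^ p) i * pL ^ i) (vL (pL ^ p) + 1)" using L i False by blast
      then have "vL (co (pL ^ p) i * pL ^ i) \<ge> int p + 1" using term_val[OF cK nc, of i] v pL
        by (simp add: vge_def)
      then have a: "vL (co (pL ^ p) i) > 0" using term_val[OF cK nc] i by simp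
      have "int p dvd vL (co (pL ^ p) i)" using Kdvd cK nc by simp
      then obtain k where "vL (co (pL ^ p) i) = int p * k" by blast
      moreover have "k \<ge> 1" using a p_pos calculation by (simp add: zero_less_mult_iff)
      ultimately have "vL (co (pL ^ p) i) \<ge> int p * 1" using mult_left_mono[of 1 k "int p"] by simp
      then show ?thesis by (simp add: vge_def)
    qed simp
  qed
qed

end


context ctx begin

lemma pow_diff_ge:
  assumes "vge vL q 1" "vge vL z 1" "i \<ge> 1"
  shows "vge vL (q ^ i - z ^ i) (vL (q - z) + (int i - 1))"
proof -
  have e: "q ^ i - z ^ i = (q - z) * (\<Sum>k<i. z ^ (i - Suc k) * q ^ k)" by (rule power_diff_sumr2)
  have "vge vL (\<Sum>k<i. z ^ (i - Suc k) * q ^ k) (int i - 1)"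
  proof (rule vge_sum)
    fix k assume k: "k \<in> {..<i}"
    have "vge vL (z ^ (i - Suc k) * q ^ k) (int (i - Suc k) * 1 + int k * 1)"
      by (intro vge_mult vge_pow assms)
    moreover have "int (i - Suc k) * 1 + int k * 1 = int i - 1" using k by auto
    ultimately show "vge vL (z ^ (i - Suc k) * q ^ k) (int i - 1)" by simp
  qed simp
  then show ?thesis unfolding e using vge_mult[OF vge_self] by blast
qed

lemma v_sigma_pL:
  assumes s: "\<sigma> \<in> gal K"
  shows "\<sigma> pL \<noteq> 0 \<and> vL (\<sigma> pL) = 1"
proof -
  define q where "q = \<sigma> pL"
  define d where "d = co (pL ^ p)"
  have qnz: "q \<noteq> 0" unfolding q_def using g_nz[OF s] pL by simp
  have eq: "q ^ p = (\<Sum>i<p. d i * q ^ i)"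
    using gexp[OF s, of "pL ^ p"] g_pow[OF s] unfolding q_def d_def by simp
  have dK: "\<And>i. i < p \<Longrightarrow> d i \<in> K" using co(1) unfolding d_def by simp
  have dge: "\<And>i. i < p \<Longrightarrow> vge vL (d i) (int p)" using eisen_coef unfolding d_def by simp
  have nzp: "pL ^ p \<noteq> 0" and vp: "vL (pL ^ p) = int p" using pL by (simp_all add: vpow)
  have r0: "nat (vL (pL ^ p) mod int p) = 0" using vp by simp
  note L = lead[OF nzp, unfolded r0]
  have d0: "d 0 \<noteq> 0" "vL (d 0) = int p" using L vp unfolding d_def by auto
  define m where "m = vL q"
  have vqp: "vL (q ^ p) = int p * m" using qnz vpow m_def by simp
  have tge: "vge vL (d i * q ^ i) (int p + int i * m)" if "i < p" for i
  proof -
    have "vge vL (q ^ i) (int i * m)" unfolding m_def by (rule vge_pow[OF vge_self])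
    then show ?thesis using vge_mult[OF dge[OF that]] by blast
  qed
  have "m = 1"
  proof (rule ccontr)
    assume m1: "m \<noteq> 1"
    show False
    proof (cases "m \<ge> 2")
      case True
      have "(\<Sum>i\<in>{..<p}. d i * q ^ i) \<noteq> 0 \<and> vL (\<Sum>i\<in>{..<p}. d i * q ^ i) = vL (d 0 * q ^ 0)"
      proof (rule lead_sum)
        show "0 \<in> {..<p}" using p_pos by simp
        show "d 0 * q ^ 0 \<noteq> 0" using d0 by simp
        fix i assume i: "i \<in> {..<p} - {0}"
        then have "int i * m \<ge> 1 * 1" using True by (intro mult_mono) auto
        then have "int p + int i * m \<ge> vL (d 0 * q ^ 0) + 1" using d0 by simp
        then show "vge vL (d i * q ^ i) (vL (d 0 * q ^ 0) + 1)"
          using tge[of i] i vge_mono[of _ "int p + int i * m"] by simp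
      qed simp
      then have "int p * m = int p" using eq vqp d0 by simp
      then show False using True p_pos by simp
    next
      case False
      then have m0: "m \<le> 0" using m1 by simp
      have "vge vL (\<Sum>i<p. d i * q ^ i) (int p * m + 1)"
      proof (rule vge_sum)
        fix i assume i: "i \<in> {..<p}"
        have "(int p - int i) * (- m) \<ge> 0" using i m0 by (intro mult_nonneg_nonneg) auto
        then have "int p + int i * m \<ge> int p * m + 1" using p_pos by (simp add: algebra_simps)
        then show "vge vL (d i * q ^ i) (int p * m + 1)" using tge[of i] i vge_mono[of _ "int p + int i * m"] by simp
      qed simp
      then show False using eq vqp qnz by (simp add: vge_def)
    qed
  qed
  then show ?thesis using qnz unfolding q_def m_def by simp
qed

lemma v_sigma:
  assumes s: "\<sigma> \<in> gal K" and y: "y \<noteq> 0"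
  shows "\<sigma> y \<noteq> 0 \<and> vL (\<sigma> y) = vL y"
proof -
  define q where "q = \<sigma> pL"
  have q: "q \<noteq> 0" "vL q = 1" using v_sigma_pL[OF s] unfolding q_def by auto
  have tv: "\<And>c i. c \<in> K \<Longrightarrow> c \<noteq> 0 \<Longrightarrow> vL (c * q ^ i) = vL c + int i"
    using q by (simp add: vmult vpow)
  define r where "r = nat (vL y mod int p)"
  note L = lead[OF y, folded r_def]
  have "(\<Sum>i\<in>{..<p}. co y i * q ^ i) \<noteq> 0 \<and> vL (\<Sum>i\<in>{..<p}. co y i * q ^ i) = vL (co y r * q ^ r)"
  proof (rule lead_sum)
    show "r \<in> {..<p}" using L by simp
    show "co y r * q ^ r \<noteq> 0" using L q by simp
    fix i assume i: "i \<in> {..<p} - {r}"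
    show "vge vL (co y i * q ^ i) (vL (co y r * q ^ r) + 1)"
    proof (cases "co y i = 0")
      case False
      have ciK: "co y i \<in> K" "co y r \<in> K" using co(1) i L by auto
      have "vge vL (co y i * pL ^ i) (vL y + 1)" using L i by auto
      then show ?thesis using tv[OF ciK(1) False] tv[OF ciK(2)] term_val[OF ciK(1) False, of i]
          term_val[OF ciK(2), of r] L pL by (simp add: vge_def)
    qed simp
  qed simp
  moreover have "vL (co y r * q ^ r) = vL y"
    using tv[of "co y r" r] term_val[of "co y r" r] L co(1) by simp
  ultimately show ?thesis using gexp[OF s, of y] unfolding q_def by simp
qed

lemma vge_sigma: "\<sigma> \<in> gal K \<Longrightarrow> vge vL (\<sigma> y) m = vge vL y m"
  using v_sigma[of \<sigma> y] g_zero[of \<sigma> K] by (cases "y = 0") (auto simp: vge_def)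

lemma sigma_id: assumes s: "\<sigma> \<in> gal K" "\<sigma> pL = pL" shows "\<sigma> = id"
proof
  fix y show "\<sigma> y = id y" using gexp[OF s(1), of y] co(2)[of y] s(2) by simp
qed

end


context ctx begin

definition "bs \<sigma> = vL (\<sigma> pL - pL) - 1"

lemma dterm:
  assumes s: "\<sigma> \<in> gal K" and c: "c \<in> K" and i: "i \<ge> 1"
  shows "vge vL (c * ((\<sigma> pL) ^ i - pL ^ i)) (vL c + int i + bs \<sigma>)"
proof -
  have "vge vL (\<sigma> pL) 1" using v_sigma_pL[OF s] by (simp add: vge_def)
  moreover have "vge vL pL 1" using pL by (simp add: vge_def)
  ultimately have "vge vL ((\<sigma> pL) ^ i - pL ^ i) (vL (\<sigma> pL - pL) + (int i - 1))"
    using pow_diff_ge i by blast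
  then have "vge vL (c * ((\<sigma> pL) ^ i - pL ^ i)) (vL c + (vL (\<sigma> pL - pL) + (int i - 1)))"
    using vge_mult[OF vge_self] by blast
  then show ?thesis unfolding bs_def by (simp add: algebra_simps)
qed

lemma sigma_minus: assumes s: "\<sigma> \<in> gal K"
  shows "\<sigma> y - y = (\<Sum>i<p. co y i * ((\<sigma> pL) ^ i - pL ^ i))"
proof -
  have e1: "\<sigma> y = (\<Sum>i<p. co y i * (\<sigma> pL) ^ i)" by (rule gexp[OF s])
  have e2: "y = (\<Sum>i<p. co y i * pL ^ i)" by (rule co(2))
  have "\<sigma> y - y = (\<Sum>i<p. co y i * (\<sigma> pL) ^ i) - (\<Sum>i<p. co y i * pL ^ i)"
    using e1 e2 by metis
  also have "\<dots> = (\<Sum>i<p. co y i * ((\<sigma> pL) ^ i - pL ^ i))"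
    by (simp add: sum_subtractf[symmetric] right_diff_distrib)
  finally show ?thesis .
qed

lemma term_ge: "y \<noteq> 0 \<Longrightarrow> i < p \<Longrightarrow> vge vL (co y i * pL ^ i) (vL y)"
  using lead[of y] vge_mono by (cases "i = nat (vL y mod int p)") (auto simp: vge_def)

lemma coef_nonneg:
  assumes "y \<noteq> 0" "vL y \<ge> 0" "i < p" "co y i \<noteq> 0"
  shows "vL (co y i) \<ge> 0"
proof -
  have cK: "co y i \<in> K" using co(1) assms(3) by simp
  have "vL (co y i) + int i \<ge> 0" using term_ge[OF assms(1,3)] term_val[OF cK assms(4), of i] assms(2) pL
    by (simp add: vge_def)
  moreover have "int p dvd vL (co y i)" using Kdvd cK assms(4) by simp
  then obtain k where k: "vL (co y i) = int p * k" by blast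
  ultimately have "int p * k > - int p" using assms(3) by simp
  have "k \<ge> 0"
  proof (rule ccontr)
    assume "\<not> k \<ge> 0" then have "k \<le> -1" by simp
    then have "int p * k \<le> int p * (-1)" by (intro mult_left_mono) auto
    then show False using \<open>int p * k > - int p\<close> by simp
  qed
  then show ?thesis using k by simp
qed

lemma ram_id: "id \<in> ram_group K vL j"
  unfolding ram_group_def using gal_id by simp

lemma sigma_ne_pL: "\<sigma> \<in> gal K \<Longrightarrow> \<sigma> \<noteq> id \<Longrightarrow> \<sigma> pL - pL \<noteq> 0"
  using sigma_id by auto

lemma ram_iff:
  assumes s: "\<sigma> \<in> gal K" and ne: "\<sigma> \<noteq> id"
  shows "\<sigma> \<in> ram_group K vL j \<longleftrightarrow> j \<le> bs \<sigma>"
proof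
  assume "\<sigma> \<in> ram_group K vL j"
  then have "vge vL (\<sigma> pL - pL) (j + 1)" using pL unfolding ram_group_def vge_def by auto
  then show "j \<le> bs \<sigma>" using sigma_ne_pL[OF s ne] unfolding bs_def vge_def by simp
next
  assume j: "j \<le> bs \<sigma>"
  have "vge vL (\<sigma> y - y) (j + 1)" if y: "y = 0 \<or> vL y \<ge> 0" for y
  proof (cases "y = 0")
    case True then show ?thesis using g_zero[OF s] by simp
  next
    case False
    then have vy: "vL y \<ge> 0" using y by simp
    show ?thesis unfolding sigma_minus[OF s]
    proof (rule vge_sum)
      fix i assume i: "i \<in> {..<p}"
      show "vge vL (co y i * ((\<sigma> pL) ^ i - pL ^ i)) (j + 1)"
      proof (cases "i = 0 \<or> co y i = 0")
        case True then show ?thesis by auto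
      next
        case nz: False
        have cK: "co y i \<in> K" using co(1) i by simp
        have "vge vL (co y i * ((\<sigma> pL) ^ i - pL ^ i)) (vL (co y i) + int i + bs \<sigma>)"
          using dterm[OF s cK] nz by simp
        moreover have "vL (co y i) \<ge> 0" using coef_nonneg[OF False vy] i nz by simp
        moreover have "vL (co y i) + int i + bs \<sigma> \<ge> j + 1" using calculation(2) nz j by simp
        ultimately show ?thesis using vge_mono by blast
      qed
    qed simp
  qed
  then show "\<sigma> \<in> ram_group K vL j" unfolding ram_group_def vge_def using s g_zero[OF s] by simp
qed

lemma gal_fin: "finite (gal K)" and gal_card: "card (gal K) = p"
  using galdeg p_pos unfolding galois_of_degree_def by (auto intro: card_ge_0_finite)

lemma nonid_ne: "gal K - {id} \<noteq> {}"
proof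
  assume "gal K - {id} = {}"
  then have "gal K \<subseteq> {id}" by blast
  then have "card (gal K) \<le> card {id}" using card_mono[of "{id}"] by simp
  then have "card (gal K) \<le> 1" by simp
  then show False using gal_card p_gt1 by simp
qed

definition "bmax = Max (bs ` (gal K - {id}))"

lemma card_ram: "card (ram_group K vL j) > 1 \<longleftrightarrow> j \<le> bmax"
proof -
  have fin: "finite (ram_group K vL j)"
    using gal_fin by (rule finite_subset[rotated]) (auto simp: ram_group_def)
  have "card (ram_group K vL j) > 1 \<longleftrightarrow> (\<exists>\<sigma>\<in>gal K - {id}. \<sigma> \<in> ram_group K vL j)"
  proof
    assume c: "card (ram_group K vL j) > 1"
    show "\<exists>\<sigma>\<in>gal K - {id}. \<sigma> \<in> ram_group K vL j"
    proof (rule ccontr)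
      assume "\<not> ?thesis"
      then have "ram_group K vL j \<subseteq> {id}" unfolding ram_group_def by auto
      then have "card (ram_group K vL j) \<le> card {id}" using card_mono[of "{id}"] by simp
      then have "card (ram_group K vL j) \<le> 1" by simp
      then show False using c by simp
    qed
  next
    assume "\<exists>\<sigma>\<in>gal K - {id}. \<sigma> \<in> ram_group K vL j"
    then obtain \<sigma> where "\<sigma> \<in> gal K - {id}" "\<sigma> \<in> ram_group K vL j" by blast
    then have "{id, \<sigma>} \<subseteq> ram_group K vL j" using ram_id by auto
    then have "card {id, \<sigma>} \<le> card (ram_group K vL j)" using fin card_mono by blast
    moreover have "id \<noteq> \<sigma>" using \<open>\<sigma> \<in> gal K - {id}\<close> by auto
    ultimately show "card (ram_group K vL j) > 1" by simp
  qed
  also have "\<dots> \<longleftrightarrow> (\<exists>\<sigma>\<in>gal K - {id}. j \<le> bs \<sigma>)"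
    by (rule bex_cong[OF refl], rule ram_iff) simp_all
  also have "\<dots> \<longleftrightarrow> j \<le> bmax"
  proof
    assume "\<exists>\<sigma>\<in>gal K - {id}. j \<le> bs \<sigma>"
    then obtain \<sigma> where "\<sigma> \<in> gal K - {id}" "j \<le> bs \<sigma>" by blast
    moreover have "bs \<sigma> \<le> bmax" unfolding bmax_def using calculation gal_fin by (intro Max_ge) auto
    ultimately show "j \<le> bmax" by simp
  next
    assume j: "j \<le> bmax"
    have "bmax \<in> bs ` (gal K - {id})" unfolding bmax_def using gal_fin nonid_ne by (intro Max_in) auto
    then show "\<exists>\<sigma>\<in>gal K - {id}. j \<le> bs \<sigma>" using j by auto
  qed
  finally show ?thesis .
qed

lemma lower_break_eq: "lower_break K vL p 1 i = bmax" if "i = 1"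
  unfolding lower_break_def using that card_ram by (intro Greatest_equality) auto

lemma sigma0_ex: "\<exists>\<sigma>\<in>gal K - {id}. bs \<sigma> = bmax"
proof -
  have "bmax \<in> bs ` (gal K - {id})" unfolding bmax_def using gal_fin nonid_ne by (intro Max_in) auto
  then show ?thesis by auto
qed

end


context dval begin

lemma prod_diff:
  assumes "finite S" "S \<noteq> {}" "\<And>k. k \<in> S \<Longrightarrow> vge v (A k) m0" "\<And>k. k \<in> S \<Longrightarrow> vge v (e k) m1" "m0 \<le> m1"
  shows "vge v ((\<Prod>k\<in>S. A k + e k) - (\<Prod>k\<in>S. A k)) (m1 + (int (card S) - 1) * m0)"
  using assms
proof (induction S rule: finite_ne_induct)
  case (singleton x) then show ?case by simp
next
  case (insert a S)
  define P' where "P' = (\<Prod>k\<in>S. A k + e k)"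
  define P where "P = (\<Prod>k\<in>S. A k)"
  have IH: "vge v (P' - P) (m1 + (int (card S) - 1) * m0)" using insert unfolding P'_def P_def by auto
  have eq: "(\<Prod>k\<in>insert a S. A k + e k) - (\<Prod>k\<in>insert a S. A k) = (A a + e a) * (P' - P) + e a * P"
    using insert.hyps unfolding P'_def P_def by (simp add: algebra_simps)
  have Aa: "vge v (A a + e a) m0"
    using insert.prems vge_add[OF _ vge_mono[of _ m1 m0]] by auto
  have P: "vge v P (int (card S) * m0)" unfolding P_def using vge_prod insert by auto
  have "vge v ((A a + e a) * (P' - P)) (m0 + (m1 + (int (card S) - 1) * m0))"
    by (rule vge_mult[OF Aa IH])
  moreover have "vge v (e a * P) (m1 + int (card S) * m0)"
    using vge_mult[OF _ P] insert.prems by auto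
  ultimately have "vge v ((A a + e a) * (P' - P) + e a * P) (m1 + int (card S) * m0)"
    by (intro vge_add) (simp_all add: algebra_simps)
  then show ?case unfolding eq using insert.hyps by simp
qed

lemma binom_approx:
  assumes "vge v e b" "b \<ge> 0"
  shows "vge v ((1 + e) ^ i - 1 - of_nat i * e) (2 * b)"
proof (induction i)
  case 0 then show ?case by simp
next
  case (Suc i)
  define X where "X = (1 + e) ^ i - 1 - of_nat i * e"
  have eq: "(1 + e) ^ Suc i - 1 - of_nat (Suc i) * e = (1 + e) * X + of_nat i * (e * e)"
    unfolding X_def by (simp add: algebra_simps)
  have a: "vge v (1 + e) 0" using vge_add[OF vge_1 vge_mono[OF assms(1) assms(2)]] .
  have "vge v ((1 + e) * X) (0 + 2 * b)" using vge_mult[OF a Suc.IH[folded X_def]] .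
  moreover have "vge v (of_nat i * (e * e)) (0 + (b + b))"
    using vge_mult[OF vge_of_nat vge_mult[OF assms(1) assms(1)]] .
  ultimately show ?case unfolding eq by (intro vge_add) simp_all
qed

lemma prod_telescope:
  assumes "\<And>k. f k \<noteq> 0"
  shows "(\<Prod>k<n. f (Suc k) / f k) = f n / (f 0 :: 'a)"
  using assms by (induction n) (simp_all add: field_simps)

end

context ctx begin

definition "sg0 = (SOME \<sigma>. \<sigma> \<in> gal K - {id} \<and> bs \<sigma> = bmax)"

lemma sg0: "sg0 \<in> gal K" "sg0 \<noteq> id" "bs sg0 = bmax"
  using someI_ex[of "\<lambda>\<sigma>. \<sigma> \<in> gal K - {id} \<and> bs \<sigma> = bmax"] sigma0_ex unfolding sg0_def by auto

lemma sg0_pow: "sg0 ^^ p = id" using gal_pow_card[OF sg0(1)] gal_card by simp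

lemma bmax_pos: "bmax \<ge> 1"
proof -
  define q where "q = sg0 pL"
  have q: "q \<noteq> 0" "vL q = 1" using v_sigma_pL[OF sg0(1)] unfolding q_def by auto
  have qne: "q - pL \<noteq> 0" using sigma_ne_pL[OF sg0(1,2)] unfolding q_def .
  define u where "u = q / pL"
  have u: "u \<noteq> 0" "vL u = 0" unfolding u_def using q pL by (simp_all add: vdiv)
  have r0: "nat (vL u mod int p) = 0" using u by simp
  note L = lead[OF u(1), unfolded r0]
  define c0 where "c0 = co u 0"
  have c0: "c0 \<in> K" "c0 \<noteq> 0" "vL c0 = 0" using L u co(1)[of u] p_pos unfolding c0_def by auto
  have uc: "vge vL (u - c0) 1"
  proof -
    have "u = (\<Sum>i\<in>{..<p}. co u i * pL ^ i)" by (rule co(2))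
    also have "\<dots> = co u 0 * pL ^ 0 + (\<Sum>i\<in>{..<p} - {0}. co u i * pL ^ i)"
      using p_pos by (simp add: sum.remove)
    finally have "u - c0 = (\<Sum>i\<in>{..<p} - {0}. co u i * pL ^ i)" unfolding c0_def
      by (metis add_diff_cancel_left' power_0 mult_1_right)
    moreover have "vge vL (\<Sum>i\<in>{..<p} - {0}. co u i * pL ^ i) 1"
      using L u by (intro vge_sum) auto
    ultimately show ?thesis by simp
  qed
  define f where "f k = (sg0 ^^ k) pL" for k
  have fnz: "f k \<noteq> 0" for k unfolding f_def using g_nz[OF gal_funpow[OF sg0(1)]] pL by simp
  have fu: "(sg0 ^^ k) u = f (Suc k) / f k" for k
    unfolding u_def q_def f_def using g_divide[OF gal_funpow[OF sg0(1)], of k]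
    by (simp add: funpow_Suc_right del: funpow.simps)
  have prod1: "(\<Prod>k<p. (sg0 ^^ k) u) = 1"
    using prod_telescope[of f p, OF fnz] fu fnz sg0_pow pL unfolding f_def by simp
  have e: "vge vL ((sg0 ^^ k) u - c0) 1" for k
    using uc vge_sigma[OF gal_funpow[OF sg0(1)], of k "u - c0"] g_diff[OF gal_funpow[OF sg0(1)]]
      g_K[OF gal_funpow[OF sg0(1)] c0(1)] by simp
  have "vge vL ((\<Prod>k\<in>{..<p}. c0 + ((sg0 ^^ k) u - c0)) - (\<Prod>k\<in>{..<p}. c0)) (1 + (int (card {..<p}) - 1) * 0)"
    using p_pos c0 e by (intro prod_diff) (auto simp: vge_def)
  then have a1: "vge vL (1 - c0 ^ p) 1" using prod1 by simp
  have "vge vL ((\<Prod>k\<in>{..<p}. c0 + (u - c0)) - (\<Prod>k\<in>{..<p}. c0)) (1 + (int (card {..<p}) - 1) * 0)"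
    using p_pos c0 uc by (intro prod_diff) (auto simp: vge_def)
  then have a2: "vge vL (u ^ p - c0 ^ p) 1" by simp
  have a3: "vge vL (u ^ p - 1) 1" using vge_diff[OF a2 a1] by simp
  have uge: "vge vL u 0" using u by (simp add: vge_def)
  have mid: "vge vL (\<Sum>k\<in>{1..<p}. of_nat (p choose k) * u ^ k * (-1) ^ (p - k)) 1"
  proof (rule vge_sum)
    fix k assume k: "k \<in> {1..<p}"
    then have "p dvd (p choose k)" using dvd_choose_prime[OF _ _ _ pr] by auto
    then obtain m where m: "p choose k = p * m" by blast
    have "vge vL (of_nat p * of_nat m * u ^ k * (-1) ^ (p - k)) (1 + 0 + int k * 0 + 0)"
      by (intro vge_mult vge_p vge_of_nat vge_pow uge) (simp add: vge_def vpow)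
    then show "vge vL (of_nat (p choose k) * u ^ k * (-1) ^ (p - k)) 1" using m by simp
  qed simp
  have bin: "(u - 1) ^ p = u ^ p + (-1) ^ p + (\<Sum>k\<in>{1..<p}. of_nat (p choose k) * u ^ k * (-1) ^ (p - k))"
  proof -
    define g where "g k = of_nat (p choose k) * u ^ k * (-1 :: 'a) ^ (p - k)" for k
    have "(u + (-1)) ^ p = (\<Sum>k\<le>p. g k)" unfolding g_def by (rule binomial_ring)
    also have "{..p} = insert 0 {1..p}" by auto
    also have "sum g (insert 0 {1..p}) = g 0 + sum g {1..p}" by (simp add: sum.insert)
    also have "{1..p} = insert p {1..<p}" using p_pos by auto
    also have "sum g (insert p {1..<p}) = g p + sum g {1..<p}" by (simp add: sum.insert)
    finally have "(u - 1) ^ p = g 0 + (g p + sum g {1..<p})" by simp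
    then show ?thesis unfolding g_def by simp
  qed
  have sgn: "vge vL ((-1) ^ p + 1 :: 'a) 1"
  proof (cases "odd p")
    case True then show ?thesis by simp
  next
    case False
    then have "2 dvd p" by simp
    then have "2 = p" by (rule primes_dvd_imp_eq[OF two_is_prime_nat pr])
    then have "p = 2" by simp
    then have "((-1) ^ p + 1 :: 'a) = of_nat p" by simp
    then show ?thesis using vge_p by simp
  qed
  have "(u - 1) ^ p = (u ^ p - 1) + ((-1) ^ p + 1) + (\<Sum>k\<in>{1..<p}. of_nat (p choose k) * u ^ k * (-1) ^ (p - k))"
    using bin by simp
  then have up: "vge vL ((u - 1) ^ p) 1" using vge_add[OF vge_add[OF a3 sgn] mid] by simp
  have u1: "u - 1 \<noteq> 0"
  proof
    assume "u - 1 = 0" then have "q = pL" unfolding u_def using pL by (simp add: field_simps)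
    then show False using qne by simp
  qed
  have "int p * vL (u - 1) \<ge> 1" using up u1 vpow[OF u1, of p] by (simp add: vge_def)
  have vu1: "vL (u - 1) \<ge> 1"
  proof (rule ccontr)
    assume "\<not> vL (u - 1) \<ge> 1"
    then have "int p * vL (u - 1) \<le> 0" by (intro mult_nonneg_nonpos) auto
    then show False using \<open>int p * vL (u - 1) \<ge> 1\<close> by simp
  qed
  have "q - pL = pL * (u - 1)" unfolding u_def using pL by (simp add: field_simps)
  then have "vL (q - pL) = 1 + vL (u - 1)" using vmult pL u1 by simp
  then show ?thesis using vu1 sg0(3) unfolding bs_def q_def by simp
qed

end


context ctx begin

definition "D y = sg0 y - y"

lemma D_sum: "D y = (\<Sum>i<p. co y i * ((sg0 pL) ^ i - pL ^ i))"
  unfolding D_def by (rule sigma_minus[OF sg0(1)])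

lemma D_add: "D (x + y) = D x + D y" unfolding D_def by (simp add: g_add[OF sg0(1)])
lemma D_diff: "D (x - y) = D x - D y" unfolding D_def by (simp add: g_diff[OF sg0(1)])
lemma D_zero: "D 0 = 0" unfolding D_def by (simp add: g_zero[OF sg0(1)])
lemma D_smult: "c \<in> K \<Longrightarrow> D (c * y) = c * D y"
  unfolding D_def by (simp add: g_mult[OF sg0(1)] g_K[OF sg0(1)] algebra_simps)
lemma D_of_nat: "D (of_nat n * y) = of_nat n * D y" using D_smult Kof_nat' by blast
lemma D_sumf: "D (sum f S) = (\<Sum>i\<in>S. D (f i))"
  by (induction S rule: infinite_finite_induct) (simp_all add: D_zero D_add)
lemma Dn_zero: "(D ^^ k) 0 = 0" by (induction k) (simp_all add: D_zero)

lemma dterm_exact: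
  assumes c: "c \<in> K" "c \<noteq> 0" and i: "1 \<le> i" "i < p"
  shows "c * ((sg0 pL) ^ i - pL ^ i) \<noteq> 0 \<and> vL (c * ((sg0 pL) ^ i - pL ^ i)) = vL c + int i + bmax"
proof -
  define q where "q = sg0 pL"
  have q: "q \<noteq> 0" "vL q = 1" using v_sigma_pL[OF sg0(1)] unfolding q_def by auto
  have qne: "q - pL \<noteq> 0" using sigma_ne_pL[OF sg0(1,2)] unfolding q_def .
  define e where "e = q / pL - 1"
  have qe: "q = pL * (1 + e)" unfolding e_def using pL by (simp add: field_simps)
  have qpe: "q - pL = pL * e" using qe by (simp add: algebra_simps)
  have enz: "e \<noteq> 0" using qne qpe by auto
  have ve: "vL e = bmax" using qpe vmult[OF pL(1) enz] pL sg0(3) unfolding bs_def q_def by simp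
  have b1: "bmax \<ge> 1" by (rule bmax_pos)
  have R: "vge vL ((1 + e) ^ i - 1 - of_nat i * e) (2 * bmax)"
    using binom_approx[of e bmax i] ve b1 by (simp add: vge_def)
  have "\<not> p dvd i" using i by (auto dest: dvd_imp_le)
  then have ui: "(of_nat i :: 'a) \<noteq> 0 \<and> vL (of_nat i :: 'a) = 0"
    using unit_nat[of i] by simp
  have ie: "of_nat i * e \<noteq> 0" "vL (of_nat i * e) = bmax" using ui enz ve vmult by auto
  have "vge vL ((1 + e) ^ i - 1 - of_nat i * e) (vL (of_nat i * e) + 1)"
    using R ie b1 vge_mono[of _ "2 * bmax" "bmax + 1"] by simp
  note X0 = v_add_strict[OF ie(1) this]
  have id: "of_nat i * e + ((1 + e) ^ i - 1 - of_nat i * e) = (1 + e) ^ i - 1" by simp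
  have X: "(1 + e) ^ i - 1 \<noteq> 0 \<and> vL ((1 + e) ^ i - 1) = bmax" using X0 ie(2) unfolding id by simp
  have eq: "q ^ i - pL ^ i = pL ^ i * ((1 + e) ^ i - 1)"
    unfolding qe power_mult_distrib by (simp add: algebra_simps)
  show ?thesis unfolding q_def[symmetric] eq using X c pL by (simp add: vmult vpow)
qed

lemma D_vge: "vge vL y m \<Longrightarrow> vge vL (D y) (m + bmax)"
proof (cases "y = 0")
  case True then show ?thesis by (simp add: D_zero)
next
  case False
  assume ym: "vge vL y m"
  then have m: "m \<le> vL y" using False by (simp add: vge_def)
  have "vge vL (D y) (vL y + bmax)" unfolding D_sum
  proof (rule vge_sum)
    fix i assume i: "i \<in> {..<p}"
    show "vge vL (co y i * ((sg0 pL) ^ i - pL ^ i)) (vL y + bmax)"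
    proof (cases "i = 0 \<or> co y i = 0")
      case True then show ?thesis by auto
    next
      case nz: False
      have cK: "co y i \<in> K" using co(1) i by simp
      have "vL (co y i) + int i \<ge> vL y" using term_ge[OF False, of i] i term_val[OF cK, of i] nz pL
        by (simp add: vge_def)
      then show ?thesis using dterm_exact[OF cK, of i] nz i by (simp add: vge_def)
    qed
  qed simp
  then show ?thesis using m vge_mono by fastforce
qed

lemma Dn_vge: "vge vL y m \<Longrightarrow> vge vL ((D ^^ k) y) (m + int k * bmax)"
proof (induction k)
  case 0 then show ?case by simp
next
  case (Suc k)
  then have "vge vL (D ((D ^^ k) y)) (m + int k * bmax + bmax)" using D_vge by blast
  then show ?case by (simp add: algebra_simps)
qed

lemma D_eq:
  assumes y: "y \<noteq> 0" and nd: "\<not> int p dvd vL y"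
  shows "D y \<noteq> 0 \<and> vL (D y) = vL y + bmax"
proof -
  define r where "r = nat (vL y mod int p)"
  note L = lead[OF y, folded r_def]
  have "0 \<le> vL y mod int p" using p_pos by simp
  moreover have "vL y mod int p \<noteq> 0" using nd by (simp add: dvd_eq_mod_eq_0)
  ultimately have r0: "r \<noteq> 0" unfolding r_def by simp
  have crK: "co y r \<in> K" using co(1) L by simp
  have vr: "vL (co y r) + int r = vL y" using L term_val[OF crK, of r] by simp
  define f where "f i = co y i * ((sg0 pL) ^ i - pL ^ i)" for i
  have fr: "f r \<noteq> 0 \<and> vL (f r) = vL y + bmax" unfolding f_def
    using dterm_exact[OF crK, of r] L r0 vr by simp
  have "sum f {..<p} \<noteq> 0 \<and> vL (sum f {..<p}) = vL (f r)"
  proof (rule lead_sum)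
    show "r \<in> {..<p}" using L by simp
    show "f r \<noteq> 0" using fr by simp
    fix i assume i: "i \<in> {..<p} - {r}"
    show "vge vL (f i) (vL (f r) + 1)"
    proof (cases "i = 0 \<or> co y i = 0")
      case True then show ?thesis unfolding f_def by auto
    next
      case nz: False
      have cK: "co y i \<in> K" using co(1) i by simp
      have "vge vL (co y i * pL ^ i) (vL y + 1)" using L i by auto
      then have "vL (co y i) + int i \<ge> vL y + 1" using term_val[OF cK, of i] nz pL by (simp add: vge_def)
      then show ?thesis using dterm_exact[OF cK, of i] nz i fr unfolding f_def by (simp add: vge_def)
    qed
  qed simp
  then show ?thesis using fr unfolding D_sum f_def by simp
qed

lemma sg_pow_D: "(sg0 ^^ n) y = (\<Sum>k\<le>n. of_nat (n choose k) * (D ^^ k) y)"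
proof (induction n)
  case 0 then show ?case by simp
next
  case (Suc n)
  define x where "x k = (D ^^ k) y" for k
  have xs: "sg0 (x k) = x k + x (Suc k)" for k unfolding x_def D_def by simp
  have "(sg0 ^^ Suc n) y = sg0 ((sg0 ^^ n) y)" by simp
  also have "\<dots> = (\<Sum>k\<le>n. of_nat (n choose k) * (x k + x (Suc k)))"
    unfolding Suc x_def[symmetric] using xs
    by (simp add: g_sum[OF sg0(1)] g_mult[OF sg0(1)] g_of_nat[OF sg0(1)])
  also have "\<dots> = (\<Sum>k\<le>n. of_nat (n choose k) * x k) + (\<Sum>k\<le>n. of_nat (n choose k) * x (Suc k))"
    by (simp add: distrib_left sum.distrib)
  also have "(\<Sum>k\<le>n. of_nat (n choose k) * x k) = x 0 + (\<Sum>k<n. of_nat (n choose Suc k) * x (Suc k))"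
    by (simp add: sum.atMost_shift)
  also have "(\<Sum>k<n. of_nat (n choose Suc k) * x (Suc k)) = (\<Sum>k\<le>n. of_nat (n choose Suc k) * x (Suc k))"
    by (simp add: lessThan_Suc_atMost[symmetric] binomial_eq_0)
  also have "x 0 + (\<Sum>k\<le>n. of_nat (n choose Suc k) * x (Suc k)) + (\<Sum>k\<le>n. of_nat (n choose k) * x (Suc k))
      = x 0 + (\<Sum>k\<le>n. of_nat (Suc n choose Suc k) * x (Suc k))"
    by (simp add: sum.distrib[symmetric] algebra_simps)
  also have "\<dots> = (\<Sum>k\<le>Suc n. of_nat (Suc n choose k) * x k)"
    by (simp only: sum.atMost_Suc_shift binomial_n_0 of_nat_1 mult_1)
  finally show ?case unfolding x_def .
qed

lemma Dp: "(D ^^ p) y = - (\<Sum>k\<in>{1..<p}. of_nat (p choose k) * (D ^^ k) y)"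
proof -
  define g where "g k = of_nat (p choose k) * (D ^^ k) y" for k
  have "y = (\<Sum>k\<le>p. g k)" using sg_pow_D[of p y] sg0_pow unfolding g_def by simp
  also have "{..p} = insert 0 {1..p}" by auto
  also have "sum g (insert 0 {1..p}) = g 0 + sum g {1..p}" by (simp add: sum.insert)
  also have "{1..p} = insert p {1..<p}" using p_pos by auto
  also have "sum g (insert p {1..<p}) = g p + sum g {1..<p}" by (simp add: sum.insert)
  finally have "y = g 0 + (g p + sum g {1..<p})" .
  then have "g p = - sum g {1..<p}" unfolding g_def by (simp add: algebra_simps eq_neg_iff_add_eq_0)
  then show ?thesis unfolding g_def by simp
qed

end


context ctx begin

lemma chain:
  assumes y: "y \<noteq> 0" and nd: "\<forall>j<k. \<not> int p dvd (vL y + int j * bmax)"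
  shows "(D ^^ k) y \<noteq> 0 \<and> vL ((D ^^ k) y) = vL y + int k * bmax"
  using nd
proof (induction k)
  case 0 then show ?case using y by simp
next
  case (Suc k)
  then have IH: "(D ^^ k) y \<noteq> 0" "vL ((D ^^ k) y) = vL y + int k * bmax" by auto
  have "\<not> int p dvd vL ((D ^^ k) y)" using Suc.prems IH(2) by auto
  then have "D ((D ^^ k) y) \<noteq> 0 \<and> vL (D ((D ^^ k) y)) = vL ((D ^^ k) y) + bmax" using D_eq IH(1) by blast
  then show ?case using IH by (simp add: algebra_simps)
qed

lemma Dp_charp: "(of_nat p :: 'a) = 0 \<Longrightarrow> (D ^^ p) y = 0"
proof -
  assume c: "(of_nat p :: 'a) = 0"
  have "\<forall>k\<in>{1..<p}. (of_nat (p choose k) :: 'a) = 0"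
  proof
    fix k assume "k \<in> {1..<p}"
    then have "p dvd (p choose k)" using dvd_choose_prime[OF _ _ _ pr] by auto
    then obtain m where "p choose k = p * m" by blast
    then show "(of_nat (p choose k) :: 'a) = 0" using c by simp
  qed
  then show ?thesis using Dp[of y] by simp
qed

lemma Dp_char0:
  assumes c: "(of_nat p :: 'a) \<noteq> 0" and y: "D y \<noteq> 0"
  shows "(D ^^ p) y \<noteq> 0 \<and> vL ((D ^^ p) y) = vL (of_nat p :: 'a) + vL (D y)"
proof -
  define t where "t k = of_nat (p choose k) * (D ^^ k) y" for k
  have b1: "bmax \<ge> 1" by (rule bmax_pos)
  have t1: "t 1 \<noteq> 0 \<and> vL (t 1) = vL (of_nat p :: 'a) + vL (D y)" unfolding t_def using c y vmult by simp
  have "sum t {1..<p} \<noteq> 0 \<and> vL (sum t {1..<p}) = vL (t 1)"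
  proof (rule lead_sum)
    show "1 \<in> {1..<p}" using p_gt1 by simp
    show "t 1 \<noteq> 0" using t1 by simp
    fix k assume k: "k \<in> {1..<p} - {1}"
    then have "p dvd (p choose k)" using dvd_choose_prime[OF _ _ _ pr] by auto
    then obtain m where m: "p choose k = p * m" by blast
    define j where "j = k - 2"
    have j: "k = Suc (Suc j)" using k unfolding j_def by auto
    have e: "(D ^^ k) y = (D ^^ Suc j) (D y)" unfolding j by (simp add: funpow_Suc_right del: funpow.simps)
    have "vge vL ((D ^^ Suc j) (D y)) (vL (D y) + int (Suc j) * bmax)" by (rule Dn_vge[OF vge_self])
    then have "vge vL ((D ^^ k) y) (vL (D y) + int (Suc j) * bmax)" by (simp only: e)
    then have "vge vL (of_nat p * (of_nat m * (D ^^ k) y)) (vL (of_nat p :: 'a) + (0 + (vL (D y) + int (Suc j) * bmax)))"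
      using c by (intro vge_mult vge_self vge_of_nat)
    moreover have "int (Suc j) * bmax \<ge> 1 * 1" using b1 by (intro mult_mono) auto
    then have "vL (of_nat p :: 'a) + (0 + (vL (D y) + int (Suc j) * bmax)) \<ge> vL (t 1) + 1"
      using t1 by simp
    ultimately have "vge vL (of_nat p * (of_nat m * (D ^^ k) y)) (vL (t 1) + 1)" by (rule vge_mono)
    moreover have "t k = of_nat p * (of_nat m * (D ^^ k) y)" unfolding t_def m by (simp add: mult.assoc)
    ultimately show "vge vL (t k) (vL (t 1) + 1)" by simp
  qed simp
  then show ?thesis using t1 Dp[of y] unfolding t_def by simp
qed

lemma vp_char0: "(of_nat p :: 'a) \<noteq> 0 \<Longrightarrow> vL (of_nat p :: 'a) \<ge> 1"
  using vge_p by (simp add: vge_def)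

lemma b_ndvd:
  assumes H: "(of_nat p :: 'a) = 0 \<or> (int p - 1) * bmax \<noteq> vL (of_nat p :: 'a)"
  shows "\<not> int p dvd bmax"
proof
  assume pb: "int p dvd bmax"
  have nd: "\<forall>j<k. \<not> int p dvd (vL pL + int j * bmax)" for k
  proof (intro allI impI notI)
    fix j assume "int p dvd (vL pL + int j * bmax)"
    then have "int p dvd 1 + int j * bmax" using pL by simp
    moreover have "int p dvd int j * bmax" using pb by simp
    ultimately have "int p dvd (1 + int j * bmax) - int j * bmax" by (rule dvd_diff)
    then have "int p dvd 1" by simp
    then show False using p_gt1 by simp
  qed
  have Cp: "(D ^^ p) pL \<noteq> 0 \<and> vL ((D ^^ p) pL) = 1 + int p * bmax" using chain[OF pL(1) nd] pL by simp
  show False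
  proof (cases "(of_nat p :: 'a) = 0")
    case True then show False using Dp_charp Cp by simp
  next
    case False
    have C1: "D pL \<noteq> 0 \<and> vL (D pL) = 1 + bmax" using chain[OF pL(1) nd, of 1] pL by simp
    then have "vL ((D ^^ p) pL) = vL (of_nat p :: 'a) + 1 + bmax" using Dp_char0[OF False] by simp
    then have "(int p - 1) * bmax = vL (of_nat p :: 'a)" using Cp by (simp add: algebra_simps)
    then show False using H False by simp
  qed
qed

definition "zz = pL ^ nat bmax"
definition "uu = (D ^^ (p - 2)) zz"
definition "ww = (D ^^ (p - 1)) zz"
definition "xx = uu / ww"

context
  assumes H: "(of_nat p :: 'a) = 0 \<or> (int p - 1) * bmax \<noteq> vL (of_nat p :: 'a)"
begin

lemma zz: "zz \<noteq> 0" "vL zz = bmax" unfolding zz_def using pL bmax_pos by (simp_all add: vpow)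

lemma zz_chain: "k \<le> p - 1 \<Longrightarrow> (D ^^ k) zz \<noteq> 0 \<and> vL ((D ^^ k) zz) = (int k + 1) * bmax"
proof -
  assume k: "k \<le> p - 1"
  have "\<forall>j<k. \<not> int p dvd (vL zz + int j * bmax)"
  proof (intro allI impI notI)
    fix j assume j: "j < k" and d: "int p dvd (vL zz + int j * bmax)"
    have "vL zz + int j * bmax = int (Suc j) * bmax" using zz by (simp add: algebra_simps)
    then have "int p dvd int (Suc j) * bmax" using d by simp
    moreover have "prime (int p)" using pr by simp
    ultimately have "int p dvd int (Suc j) \<or> int p dvd bmax" using prime_dvd_mult_iff by blast
    moreover have "\<not> p dvd Suc j" using j k p_gt1 by (auto dest: dvd_imp_le)
    then have "\<not> int p dvd int (Suc j)" by (subst int_dvd_int_iff) assumption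
    ultimately show False using b_ndvd[OF H] by blast
  qed
  then show ?thesis using chain[OF zz(1)] zz by (simp add: algebra_simps)
qed

lemma uu: "uu \<noteq> 0" "vL uu = (int p - 1) * bmax"
  using zz_chain[of "p - 2"] p_gt1 unfolding uu_def by (simp_all add: of_nat_diff)
lemma ww: "ww \<noteq> 0" "vL ww = int p * bmax"
  using zz_chain[of "p - 1"] p_gt1 unfolding ww_def by (simp_all add: of_nat_diff)
lemma Duu: "D uu = ww"
proof -
  have "p - 1 = Suc (p - 2)" using p_gt1 by simp
  then show ?thesis unfolding uu_def ww_def by simp
qed
lemma Dww: "D ww = (D ^^ p) zz"
proof -
  have "p = Suc (p - 1)" using p_gt1 by simp
  then have "(D ^^ p) zz = (D ^^ Suc (p - 1)) zz" by simp
  then show ?thesis unfolding ww_def by simp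
qed

lemma xx: "xx \<noteq> 0" "vL xx = - bmax"
  unfolding xx_def using uu ww by (simp_all add: vdiv algebra_simps)

lemma sg_xx: "sg0 xx = (uu + ww) / (ww + D ww)"
  unfolding xx_def g_divide[OF sg0(1)] using Duu unfolding D_def by (simp add: algebra_simps)

lemma xx_charp: "(of_nat p :: 'a) = 0 \<Longrightarrow> sg0 xx = xx + 1"
  using sg_xx Dww Dp_charp ww unfolding xx_def by (simp add: field_simps)

lemma T_pos: "(of_nat p :: 'a) \<noteq> 0 \<Longrightarrow> vL (of_nat p :: 'a) - (int p - 1) * bmax \<ge> 1"
proof -
  assume c: "(of_nat p :: 'a) \<noteq> 0"
  have Dz: "D zz \<noteq> 0" "vL (D zz) = 2 * bmax" using zz_chain[of 1] p_gt1 by auto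
  have d: "(D ^^ p) zz \<noteq> 0" "vL ((D ^^ p) zz) = vL (of_nat p :: 'a) + 2 * bmax"
    using Dp_char0[OF c Dz(1)] Dz by auto
  have "vge vL (D ww) (vL ww + bmax)" using D_vge[OF vge_self] .
  then have "vL (of_nat p :: 'a) + 2 * bmax \<ge> int p * bmax + bmax" using d Dww ww by (simp add: vge_def)
  then have "vL (of_nat p :: 'a) \<ge> (int p - 1) * bmax" by (simp add: algebra_simps)
  moreover have "(int p - 1) * bmax \<noteq> vL (of_nat p :: 'a)" using H c by simp
  ultimately show ?thesis by simp
qed

lemma xx_char0:
  assumes c: "(of_nat p :: 'a) \<noteq> 0"
  shows "vge vL (sg0 xx - xx - 1) (vL (of_nat p :: 'a) - (int p - 1) * bmax)"
proof -
  define d where "d = D ww"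
  have Dz: "D zz \<noteq> 0" "vL (D zz) = 2 * bmax" using zz_chain[of 1] p_gt1 by auto
  have dd: "d \<noteq> 0" "vL d = vL (of_nat p :: 'a) + 2 * bmax"
    using Dp_char0[OF c Dz(1)] Dz Dww unfolding d_def by auto
  have wd: "ww + d \<noteq> 0" "vL (ww + d) = vL ww"
    using v_sigma[OF sg0(1) ww(1)] unfolding d_def D_def by auto
  have b1: "bmax \<ge> 1" by (rule bmax_pos)
  have "vge vL ww (vL uu + 1)" using uu ww b1 by (simp add: vge_def algebra_simps)
  then have uw: "uu + ww \<noteq> 0" "vL (uu + ww) = vL uu" using v_add_strict[OF uu(1)] by auto
  have s: "sg0 xx = (uu + ww) / (ww + d)" using sg_xx unfolding d_def .
  have "sg0 xx - xx - 1 = (uu + ww) / (ww + d) - uu / ww - 1" by (simp only: s) (simp add: xx_def)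
  also have "\<dots> = - ((uu + ww) * d / (ww * (ww + d)))"
  proof -
    have nz: "ww * (ww + d) \<noteq> 0" using ww(1) wd(1) by simp
    have "(uu + ww) / (ww + d) - uu / ww - 1 = ((uu + ww) * ww - uu * (ww + d) - ww * (ww + d)) / (ww * (ww + d))"
      using ww(1) wd(1) by (simp add: diff_divide_distrib add_divide_distrib)
    also have "(uu + ww) * ww - uu * (ww + d) - ww * (ww + d) = - ((uu + ww) * d)" by (simp add: algebra_simps)
    finally show ?thesis by simp
  qed
  finally have eq: "sg0 xx - xx - 1 = - ((uu + ww) * d / (ww * (ww + d)))" .
  have "vL (sg0 xx - xx - 1) = vL uu + vL d - (vL ww + vL ww)"
    unfolding eq using uw dd wd ww(1) by (simp add: vdiv vmult)
  also have "\<dots> = vL (of_nat p :: 'a) - (int p - 1) * bmax"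
    using uu ww dd by (simp add: algebra_simps)
  finally show ?thesis by (simp add: vge_def)
qed

end

end


lemma frak_b1: "frak_b p (Suc 0) B s = int (s mod p) * B (Suc 0)"
  unfolding frak_b_def digit_def by simp

lemma frak_a1:
  fixes p :: nat and B :: "nat \<Rightarrow> int"
  assumes pr: "prime p" and nd: "\<not> int p dvd B 1"
  shows "frak_a p 1 B t < p \<and> (int (frak_a p 1 B t) * B 1) mod int p = (- t) mod int p"
    and "s < p \<Longrightarrow> (int s * B 1) mod int p = (- t) mod int p \<Longrightarrow> frak_a p 1 B t = s"
proof -
  have p0: "p > 0" using pr prime_gt_0_nat by blast
  have P: "s < p \<and> frak_b p 1 B s mod (int p ^ 1) = (- t) mod (int p ^ 1) \<longleftrightarrow>
      s < p \<and> (int s * B 1) mod int p = (- t) mod int p" for s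
    by (auto simp: frak_b1)
  have uniq: "s1 = s2" if "s1 < p" "s2 < p" "(int s1 * B 1) mod int p = (- t) mod int p"
    "(int s2 * B 1) mod int p = (- t) mod int p" for s1 s2
  proof -
    have "(int s1 * B 1) mod int p = (int s2 * B 1) mod int p" using that by simp
    then have "int p dvd (int s1 * B 1 - int s2 * B 1)" by (simp add: mod_eq_dvd_iff)
    then have "int p dvd ((int s1 - int s2) * B 1)" by (simp add: algebra_simps)
    moreover have "prime (int p)" using pr by simp
    ultimately have "int p dvd (int s1 - int s2)" using nd prime_dvd_mult_iff by blast
    moreover have "\<bar>int s1 - int s2\<bar> < int p" using that by linarith
    ultimately have "int s1 - int s2 = 0"
    proof (cases "int s1 - int s2 = 0")
      case False
      then have "\<bar>int p\<bar> \<le> \<bar>int s1 - int s2\<bar>" using dvd_imp_le_int \<open>int p dvd (int s1 - int s2)\<close> by blast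
      then show ?thesis using \<open>\<bar>int s1 - int s2\<bar> < int p\<close> by simp
    qed
    then show ?thesis by simp
  qed
  have ex: "\<exists>s. s < p \<and> (int s * B 1) mod int p = (- t) mod int p"
  proof -
    have "prime (int p)" using pr by simp
    then have "coprime (int p) (B 1)" using nd by (rule prime_imp_coprime)
    then have "coprime (B 1) (int p)" by (simp add: coprime_commute)
    then obtain u v where uv: "u * B 1 + v * int p = 1" using bezout_int[of "B 1" "int p"] by auto
    define s where "s = nat ((- t * u) mod int p)"
    have s0: "int s = (- t * u) mod int p" unfolding s_def using p0 by simp
    have "(int s * B 1) mod int p = ((- t * u) * B 1) mod int p" unfolding s0 by (simp add: mod_mult_left_eq)
    also have "(- t * u) * B 1 = - t * (1 - v * int p)"
    proof -
      have ub: "u * B 1 = 1 - v * int p" using uv by linarith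
      have "(- t * u) * B 1 = - t * (u * B 1)" by (simp add: mult.assoc)
      then show ?thesis by (simp only: ub)
    qed
    also have "- t * (1 - v * int p) = - t + (t * v) * int p" by (simp add: algebra_simps)
    also have "(- t + (t * v) * int p) mod int p = (- t) mod int p" by (rule mod_mult_self1)
    finally have "(int s * B 1) mod int p = (- t) mod int p" .
    moreover have "s < p" using p0 s0 by (simp add: nat_less_iff s_def)
    ultimately show ?thesis by blast
  qed
  then obtain s0 where s0: "s0 < p" "(int s0 * B 1) mod int p = (- t) mod int p" by blast
  have fa: "frak_a p 1 B t = s0" unfolding frak_a_def P
    using s0 uniq by (intro the_equality) (auto simp: frak_b1)
  show "frak_a p 1 B t < p \<and> (int (frak_a p 1 B t) * B 1) mod int p = (- t) mod int p" using fa s0 by simp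
  show "s < p \<Longrightarrow> (int s * B 1) mod int p = (- t) mod int p \<Longrightarrow> frak_a p 1 B t = s"
    using fa s0 uniq by simp
qed


context dval begin
lemma vprod: "finite S \<Longrightarrow> (\<And>i. i \<in> S \<Longrightarrow> f i \<noteq> 0) \<Longrightarrow> prod f S \<noteq> 0 \<and> v (prod f S) = (\<Sum>i\<in>S. v (f i))"
  by (induction S rule: finite_induct) (auto simp: vmult)
end

lemma shift_prod:
  fixes x :: "'a::comm_ring_1"
  shows "(\<Prod>j<Suc a. x + 1 - of_nat j) - (\<Prod>j<Suc a. x - of_nat j) = of_nat (Suc a) * (\<Prod>j<a. x - of_nat j)"
proof -
  have e1: "(\<Prod>j<Suc a. x + 1 - of_nat j) = (x + 1) * (\<Prod>j<a. x - of_nat j)"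
    by (subst prod.lessThan_Suc_shift) (simp add: algebra_simps)
  have e2: "(\<Prod>j<Suc a. x - of_nat j) = (\<Prod>j<a. x - of_nat j) * (x - of_nat a)" by simp
  show ?thesis unfolding e1 e2 by (simp add: algebra_simps)
qed

definition ipow :: "'a::field \<Rightarrow> int \<Rightarrow> 'a" where
  "ipow x k = (if k \<ge> 0 then x ^ nat k else inverse (x ^ nat (- k)))"

context ctx begin

lemma ipow: assumes "x \<in> K" "x \<noteq> 0"
  shows "ipow x k \<in> K \<and> ipow x k \<noteq> 0 \<and> vL (ipow x k) = k * vL x"
  using assms by (auto simp: ipow_def Kpow' Kinv' vpow vinv)

definition "PP a = (\<Prod>j<a. xx - of_nat j)"
definition "fa t = frak_a p 1 (lower_break K vL p 1) t"
definition "cc t = ipow piK ((t + int (fa t) * bmax) div int p)"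
definition "lam t = cc t * PP (fa t)"
definition "Psi i \<tau> = (if \<tau> = sg0 then 1 else if \<tau> = id then -1 else (0::'a))" for i :: nat
definition "Tt = (if (of_nat p :: 'a) = 0 then \<infinity> else enat (nat (vL (of_nat p :: 'a) - (int p - 1) * bmax)))"

lemma grp_act_Psi: "grp_act (gal K) (Psi i) y = D y"
proof -
  have "grp_act (gal K) (Psi i) y = (\<Sum>\<tau>\<in>{sg0, id}. Psi i \<tau> * \<tau> y)"
    unfolding grp_act_def using gal_fin sg0(1) gal_id by (intro sum.mono_neutral_right) (auto simp: Psi_def)
  also have "\<dots> = sg0 y - y" using sg0(2) by (simp add: Psi_def)
  finally show ?thesis unfolding D_def .
qed

lemma LB1: "lower_break K vL p 1 1 = bmax" using lower_break_eq by simp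

context
  assumes H: "(of_nat p :: 'a) = 0 \<or> (int p - 1) * bmax \<noteq> vL (of_nat p :: 'a)"
begin

lemma ndB: "\<not> int p dvd lower_break K vL p 1 1" using b_ndvd[OF H] LB1 by simp

lemma fa: "fa t < p" "(int (fa t) * bmax) mod int p = (- t) mod int p"
  using frak_a1(1)[where p=p and B="lower_break K vL p 1" and t=t, OF pr ndB] LB1 unfolding fa_def by auto

lemma fa_uniq: "s < p \<Longrightarrow> (int s * bmax) mod int p = (- t) mod int p \<Longrightarrow> fa t = s"
  using frak_a1(2)[where p=p and B="lower_break K vL p 1" and t=t and s=s, OF pr ndB] LB1 unfolding fa_def by auto

lemma fa_dvd: "int p dvd (t + int (fa t) * bmax)"
proof -
  have "int p dvd (int (fa t) * bmax - (- t))" using fa(2) by (simp add: mod_eq_dvd_iff)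
  then show ?thesis by (simp add: algebra_simps)
qed

lemma fa_shift: "fa t \<ge> 1 \<Longrightarrow> fa (t + bmax) = fa t - 1"
proof (rule fa_uniq)
  assume a: "fa t \<ge> 1"
  show "fa t - 1 < p" using fa(1)[of t] by simp
  have eq: "int (fa t - 1) * bmax - (- (t + bmax)) = t + int (fa t) * bmax" using a by (simp add: algebra_simps of_nat_diff)
  have "int p dvd (int (fa t - 1) * bmax - (- (t + bmax)))" unfolding eq by (rule fa_dvd)
  then show "(int (fa t - 1) * bmax) mod int p = (- (t + bmax)) mod int p" unfolding mod_eq_dvd_iff .
qed

lemma fa_mod: "t1 mod int p = t2 mod int p \<Longrightarrow> fa t1 = fa t2"
proof (rule fa_uniq)
  assume m: "t1 mod int p = t2 mod int p"
  show "fa t2 < p" by (rule fa(1))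
  have "int p dvd (t1 - t2)" using m by (simp add: mod_eq_dvd_iff)
  then have "int p dvd (- t2 - (- t1))" by (simp add: algebra_simps dvd_diff_commute)
  then have "(- t2) mod int p = (- t1) mod int p" by (simp add: mod_eq_dvd_iff)
  then show "(int (fa t2) * bmax) mod int p = (- t1) mod int p" using fa(2)[of t2] by simp
qed

lemma cc: "cc t \<in> K" "cc t \<noteq> 0" "vL (cc t) = t + int (fa t) * bmax"
proof -
  have i: "ipow piK ((t + int (fa t) * bmax) div int p) \<in> K \<and> ipow piK ((t + int (fa t) * bmax) div int p) \<noteq> 0
    \<and> vL (ipow piK ((t + int (fa t) * bmax) div int p)) = ((t + int (fa t) * bmax) div int p) * vL piK"
    using ipow[OF piK(1,2)] by blast
  have "((t + int (fa t) * bmax) div int p) * int p = t + int (fa t) * bmax"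
    using fa_dvd by simp
  then show "cc t \<in> K" "cc t \<noteq> 0" "vL (cc t) = t + int (fa t) * bmax" using i piK(3) unfolding cc_def by auto
qed

lemma cc_shift: "fa t \<ge> 1 \<Longrightarrow> cc (t + bmax) = cc t"
proof -
  assume a: "fa t \<ge> 1"
  have e: "t + bmax + int (fa (t + bmax)) * bmax = t + int (fa t) * bmax"
    using fa_shift[OF a] a by (simp add: algebra_simps of_nat_diff)
  show ?thesis unfolding cc_def e by (rule refl)
qed

lemma xxj: "xx - of_nat j \<noteq> 0 \<and> vL (xx - of_nat j) = - bmax"
proof -
  have "vge vL (- of_nat j :: 'a) (vL xx + 1)"
    using vge_mono[OF vge_of_nat[of j]] xx[OF H] bmax_pos by (simp add: vge_uminus)
  then have "xx + (- of_nat j) \<noteq> 0 \<and> vL (xx + (- of_nat j)) = vL xx" by (rule v_add_strict[OF xx(1)[OF H]])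
  then show ?thesis using xx(2)[OF H] by simp
qed

lemma PP: "PP a \<noteq> 0" "vL (PP a) = - (int a * bmax)"
  using vprod[of "{..<a}" "\<lambda>j. xx - of_nat j"] xxj unfolding PP_def by auto

lemma lam: "lam t \<noteq> 0" "vL (lam t) = t"
  unfolding lam_def using cc PP by (simp_all add: vmult)

lemma lam_ratio: "t1 mod int p = t2 mod int p \<Longrightarrow> lam t1 * inverse (lam t2) \<in> K"
proof -
  assume m: "t1 mod int p = t2 mod int p"
  have "fa t1 = fa t2" using fa_mod[OF m] .
  then have "lam t1 * inverse (lam t2) = cc t1 * inverse (cc t2)"
    unfolding lam_def using PP cc by (simp add: field_simps)
  then show ?thesis using cc Kmult' Kinv' by simp
qed

definition "eps = sg0 xx - xx - 1"

lemma D_PP: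
  assumes a: "a \<ge> 1"
  shows "D (PP a) - of_nat a * PP (a - 1) = (\<Prod>j<a. (xx + 1 - of_nat j) + eps) - (\<Prod>j<a. xx + 1 - of_nat j)"
proof -
  have s: "sg0 (PP a) = (\<Prod>j<a. (xx + 1 - of_nat j) + eps)"
    unfolding PP_def eps_def by (simp add: g_prod[OF sg0(1)] g_diff[OF sg0(1)] g_of_nat[OF sg0(1)])
  obtain a' where a': "a = Suc a'" using a by (cases a) auto
  have "(\<Prod>j<a. xx + 1 - of_nat j) - PP a = of_nat a * PP (a - 1)"
    unfolding PP_def a' using shift_prod[of xx a'] by simp
  then show ?thesis unfolding D_def s by (simp add: algebra_simps)
qed

lemma D_PP_charp: "(of_nat p :: 'a) = 0 \<Longrightarrow> a \<ge> 1 \<Longrightarrow> D (PP a) = of_nat a * PP (a - 1)"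
  using D_PP xx_charp[OF H] unfolding eps_def by simp

lemma D_PP_char0:
  assumes c: "(of_nat p :: 'a) \<noteq> 0" and a: "a \<ge> 1"
  shows "vge vL (D (PP a) - of_nat a * PP (a - 1)) ((vL (of_nat p :: 'a) - (int p - 1) * bmax) - (int a - 1) * bmax)"
proof -
  define T where "T = vL (of_nat p :: 'a) - (int p - 1) * bmax"
  have T1: "T \<ge> 1" using T_pos[OF H c] unfolding T_def .
  have b1: "bmax \<ge> 1" by (rule bmax_pos)
  have A: "vge vL (xx + 1 - of_nat j) (- bmax)" for j
  proof -
    have "vge vL xx (- bmax)" using xx[OF H] by (simp add: vge_def)
    moreover have "vge vL (1 - of_nat j :: 'a) (- bmax)"
      using vge_mono[OF vge_diff[OF vge_1 vge_of_nat]] b1 by simp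
    ultimately show ?thesis using vge_add by (simp add: add_diff_eq[symmetric])
  qed
  have E: "vge vL eps T" using xx_char0[OF H c] unfolding eps_def T_def .
  have "vge vL ((\<Prod>j\<in>{..<a}. (xx + 1 - of_nat j) + eps) - (\<Prod>j\<in>{..<a}. xx + 1 - of_nat j))
      (T + (int (card {..<a}) - 1) * (- bmax))"
    using a A E T1 b1 by (intro prod_diff) (auto simp: lessThan_empty_iff)
  then show ?thesis unfolding D_PP[OF a] T_def by (simp add: algebra_simps)
qed

end
end


context ctx begin
context
  assumes H: "(of_nat p :: 'a) = 0 \<or> (int p - 1) * bmax \<noteq> vL (of_nat p :: 'a)"
begin

lemma D1: "D 1 = 0" unfolding D_def using g_one[OF sg0(1)] by simp

lemma lam_psi:
  "\<exists>u. u \<in> K \<and> u \<noteq> 0 \<and> vL u = 0 \<and>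
     (if 1 \<le> fa t then cong_tol vL Tt (t + bmax) (D (lam t)) (u * lam (t + bmax))
      else cong_tol vL Tt (t + bmax) (D (lam t)) 0)"
proof (cases "fa t = 0")
  case True
  have "D (cc t * 1) = cc t * D 1" by (rule D_smult[OF cc(1)[OF H]])
  then have "D (lam t) = 0" unfolding lam_def True PP_def using D1 by simp
  then show ?thesis using True K1' by (intro exI[of _ 1]) (simp add: cong_tol_def)
next
  case False
  define a where "a = fa t"
  have a: "a \<ge> 1" "a < p" using False fa(1)[OF H, of t] unfolding a_def by auto
  have "\<not> p dvd a" using a by (auto dest: dvd_imp_le)
  then have u: "(of_nat a :: 'a) \<noteq> 0" "vL (of_nat a :: 'a) = 0" using unit_nat by auto
  have ls: "lam (t + bmax) = cc t * PP (a - 1)"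
    unfolding lam_def using cc_shift[OF H] fa_shift[OF H] a unfolding a_def by simp
  have Dl: "D (lam t) = cc t * D (PP a)" unfolding lam_def a_def using D_smult[OF cc(1)[OF H]] by simp
  have diff: "D (lam t) - of_nat a * lam (t + bmax) = cc t * (D (PP a) - of_nat a * PP (a - 1))"
    unfolding Dl ls by (simp add: algebra_simps)
  have "cong_tol vL Tt (t + bmax) (D (lam t)) (of_nat a * lam (t + bmax))"
  proof (cases "(of_nat p :: 'a) = 0")
    case True
    then have "D (lam t) = of_nat a * lam (t + bmax)"
      using diff D_PP_charp[OF H True a(1)] by simp
    then show ?thesis by (simp add: cong_tol_def)
  next
    case c0: False
    define T where "T = vL (of_nat p :: 'a) - (int p - 1) * bmax"
    have T1: "T \<ge> 1" using T_pos[OF H c0] unfolding T_def .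
    have Tt: "Tt = enat (nat T)" unfolding Tt_def T_def using c0 by simp
    have E: "vge vL (D (PP a) - of_nat a * PP (a - 1)) (T - (int a - 1) * bmax)"
      using D_PP_char0[OF H c0 a(1)] unfolding T_def .
    have "vge vL (D (lam t) - of_nat a * lam (t + bmax)) (vL (cc t) + (T - (int a - 1) * bmax))"
      unfolding diff by (rule vge_mult[OF vge_self E])
    moreover have "vL (cc t) + (T - (int a - 1) * bmax) = t + bmax + int (nat T)"
      using cc(3)[OF H, of t] T1 unfolding a_def by (simp add: algebra_simps)
    ultimately show ?thesis unfolding cong_tol_def Tt by (auto simp: vge_def)
  qed
  then show ?thesis unfolding a_def[symmetric] using a u Kof_nat' by (intro exI[of _ "of_nat a"]) simp
qed

lemma scaffold_ok: "scaffold K vL p 1 (lower_break K vL p 1) Tt lam Psi"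
proof -
  have T1: "Tt \<ge> 1"
  proof (cases "(of_nat p :: 'a) = 0")
    case False
    have "vL (of_nat p :: 'a) - (int p - 1) * bmax \<ge> 1" using T_pos[OF H False] .
    then have "nat (vL (of_nat p :: 'a) - (int p - 1) * bmax) \<ge> 1" by simp
    then show ?thesis unfolding Tt_def using False by (simp add: one_enat_def)
  qed (simp add: Tt_def)
  have dig: "digit p 0 (fa t) = fa t" for t unfolding digit_def using fa(1)[OF H, of t] by simp
  have PsiK: "Psi i \<sigma> \<in> K" for i \<sigma> unfolding Psi_def using K0' K1' Kuminus'[OF K1'] by simp
  have G1: "grp_act (gal K) (Psi i) 1 = 0" for i using grp_act_Psi D1 by simp
  have main: "\<forall>t. \<exists>u. u \<in> K \<and> u \<noteq> 0 \<and> vL u = 0 \<and>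
           (let s = t + int p ^ (1 - 1) * lower_break K vL p 1 1 in
             (if digit p (1 - 1) (frak_a p 1 (lower_break K vL p 1) t) \<ge> 1
              then cong_tol vL Tt s (grp_act (gal K) (Psi 1) (lam t)) (u * lam s)
              else cong_tol vL Tt s (grp_act (gal K) (Psi 1) (lam t)) 0))"
  proof
    fix t
    show "\<exists>u. u \<in> K \<and> u \<noteq> 0 \<and> vL u = 0 \<and>
           (let s = t + int p ^ (1 - 1) * lower_break K vL p 1 1 in
             (if digit p (1 - 1) (frak_a p 1 (lower_break K vL p 1) t) \<ge> 1
              then cong_tol vL Tt s (grp_act (gal K) (Psi 1) (lam t)) (u * lam s)
              else cong_tol vL Tt s (grp_act (gal K) (Psi 1) (lam t)) 0))"
    proof -
      have e1: "digit p (1 - 1) (frak_a p 1 (lower_break K vL p 1) t) = fa t"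
        using dig[of t] unfolding fa_def by simp
      have e2: "t + int p ^ (1 - 1) * lower_break K vL p 1 1 = t + bmax" using LB1 by simp
      show ?thesis unfolding Let_def e1 e2 grp_act_Psi by (rule lam_psi)
    qed
  qed
  have b2: "\<forall>i\<in>{1..1}. \<not> int p dvd lower_break K vL p 1 i" using ndB[OF H] by auto
  have lamc: "\<forall>t. lam t \<noteq> 0 \<and> vL (lam t) = t" using lam[OF H] by auto
  have rat: "\<forall>t1 t2. t1 mod (int p ^ 1) = t2 mod (int p ^ 1) \<longrightarrow> lam t1 * inverse (lam t2) \<in> K"
    using lam_ratio[OF H] by simp
  have last: "\<forall>i\<in>{1..1}. (\<forall>\<sigma>\<in>gal K. Psi i \<sigma> \<in> K) \<and> grp_act (gal K) (Psi i) 1 = 0 \<and>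
        (\<forall>t. \<exists>u. u \<in> K \<and> u \<noteq> 0 \<and> vL u = 0 \<and>
           (let s = t + int p ^ (1 - i) * lower_break K vL p 1 i in
             (if digit p (1 - i) (frak_a p 1 (lower_break K vL p 1) t) \<ge> 1
              then cong_tol vL Tt s (grp_act (gal K) (Psi i) (lam t)) (u * lam s)
              else cong_tol vL Tt s (grp_act (gal K) (Psi i) (lam t)) 0)))"
  proof
    fix i :: nat assume "i \<in> {1..1}"
    then have i: "i = 1" by simp
    show "(\<forall>\<sigma>\<in>gal K. Psi i \<sigma> \<in> K) \<and> grp_act (gal K) (Psi i) 1 = 0 \<and>
        (\<forall>t. \<exists>u. u \<in> K \<and> u \<noteq> 0 \<and> vL u = 0 \<and>
           (let s = t + int p ^ (1 - i) * lower_break K vL p 1 i in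
             (if digit p (1 - i) (frak_a p 1 (lower_break K vL p 1) t) \<ge> 1
              then cong_tol vL Tt s (grp_act (gal K) (Psi i) (lam t)) (u * lam s)
              else cong_tol vL Tt s (grp_act (gal K) (Psi i) (lam t)) 0)))"
      unfolding i using PsiK G1 main by blast
  qed
  show ?thesis unfolding scaffold_def using T1 b2 lamc rat last by blast
qed

end
end

theorem lemma4p1:
  fixes K :: "'a::field set" and vK vL :: "'a \<Rightarrow> int" and p :: nat
  assumes "subfield K"
    and "normalized_dval_on K vK"
    and "complete_wrt K vK"
    and "prime p"
    and "residue_char K vK p"
    and "residue_perfect K vK p"
    and "normalized_dval vL"
    and "galois_of_degree K p"
    and "totally_ramified K vK vL p"
  shows "(of_nat p = (0::'a) \<longrightarrow> galois_scaffold K vL p 1 \<infinity>)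
       \<and> ((\<forall>m::nat. m > 0 \<longrightarrow> of_nat m \<noteq> (0::'a))
           \<and> (int p - 1) * lower_break K vL p 1 1 \<noteq> int p * vK (of_nat p)
          \<longrightarrow> int p * vK (of_nat p) - (int p - 1) * lower_break K vL p 1 1 \<ge> 1
            \<and> galois_scaffold K vL p 1
                 (enat (nat (int p * vK (of_nat p) - (int p - 1) * lower_break K vL p 1 1))))"
proof -
  interpret ctx vL K vK p
    using assms by (intro ctx.intro dval.intro ctx_axioms.intro) auto
  have LB: "lower_break K vL p 1 1 = bmax" by (rule LB1)
  have vp: "(of_nat p :: 'a) \<noteq> 0 \<Longrightarrow> vL (of_nat p :: 'a) = int p * vK (of_nat p)"
    using vLK Kof_nat' by blast
  have A: "galois_scaffold K vL p 1 \<infinity>" if c: "of_nat p = (0::'a)"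
  proof -
    have H: "(of_nat p :: 'a) = 0 \<or> (int p - 1) * bmax \<noteq> vL (of_nat p :: 'a)" using c by simp
    have "Tt = \<infinity>" unfolding Tt_def using c by simp
    then show ?thesis unfolding galois_scaffold_def using scaffold_ok[OF H]
      by (intro exI[of _ lam] exI[of _ Psi]) simp
  qed
  have B: "int p * vK (of_nat p) - (int p - 1) * lower_break K vL p 1 1 \<ge> 1
            \<and> galois_scaffold K vL p 1
                 (enat (nat (int p * vK (of_nat p) - (int p - 1) * lower_break K vL p 1 1)))"
    if c: "\<forall>m::nat. m > 0 \<longrightarrow> of_nat m \<noteq> (0::'a)"
      and hb: "(int p - 1) * lower_break K vL p 1 1 \<noteq> int p * vK (of_nat p)"
  proof -
    have c0: "(of_nat p :: 'a) \<noteq> 0" using c p_pos by blast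
    have H: "(of_nat p :: 'a) = 0 \<or> (int p - 1) * bmax \<noteq> vL (of_nat p :: 'a)"
      using hb vp[OF c0] LB by simp
    have "Tt = enat (nat (int p * vK (of_nat p) - (int p - 1) * lower_break K vL p 1 1))"
      unfolding Tt_def using c0 vp[OF c0] LB by simp
    moreover have "int p * vK (of_nat p) - (int p - 1) * lower_break K vL p 1 1 \<ge> 1"
      using T_pos[OF H c0] vp[OF c0] LB by simp
    ultimately show ?thesis unfolding galois_scaffold_def using scaffold_ok[OF H]
      by (intro conjI exI[of _ lam] exI[of _ Psi]) simp_all
  qed
  show ?thesis using A B by blast
qed


end
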